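(* Let $(\mathcal{F},\sigma,\partial)\subset(\mathcal{M},\sigma,\partial)$ and $\mathcal{K}=\mathcal{F}^\sigma$ be as in one of the two settings below. Let $a_1,\dots,a_n$ be nonzero elements of $\mathcal{F}$ and let $z_1,\dots,z_n\in\mathcal{M}$ satisfy $\sigma(z_i)-z_i=a_i$ for $i=1,\dots,n$. Then $z_1,\dots,z_n$ satisfy a nontrivial algebraic $\partial$-differential relation over $\mathcal{F}$ (i.e. the family $\{\partial^k z_i\}_{k\ge0,\,1\le i\le n}$ is algebraically dependent over $\mathcal{F}$) if and only if there exist a nonzero homogeneous linear differential polynomial $L(Y_1,\dots,Y_n)=\sum_{i=1}^n\sum_{k=0}^{m} c_{i,k}\,\partial^k Y_i$ with coefficients $c_{i,k}\in\mathcal{K}$ and an element $f\in\mathcal{F}$ such that $L(a_1,\dots,a_n)=\sigma(f)-f$.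
   Context: Setting 1: $\mathcal{M}=\mathcal{M}er(\mathbb{C})$ is the field of meromorphic functions on $\mathbb{C}$, $\sigma=\tau:f(x)\mapsto f(x+1)$, $\partial=d/dx$; $\mathcal{P}$ is the field of $1$-periodic meromorphic functions on $\mathbb{C}$, and $\mathcal{F}\subset\mathcal{M}$ is a subfield containing $\mathcal{P}(x)$, stable under $\tau,\tau^{-1},\partial$; then $\mathcal{K}=\mathcal{P}$. Setting 2: fix $q\in\mathbb{C}$ with $|q|\neq1$; $\mathcal{M}=\mathcal{M}er(\mathbb{C}^* )$, $\sigma=\sigma_q:f(x)\mapsto f(qx)$, $\partial=x\,d/dx$; $\mathcal{E}_q$ is the field of $\sigma_q$-invariant meromorphic functions on $\mathbb{C}^*$, and $\mathcal{F}\subset\mathcal{M}$ is a subfield containing $\mathcal{E}_q(x)$, stable under $\sigma_q,\sigma_q^{-1},\partial$; then $\mathcal{K}=\mathcal{E}_q$. *)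

theory Defs
  imports "HOL-Analysis.Analysis"
begin

text \<open>Meromorphic functions on an open set S (values at the poles are irrelevant):
  near every point z of S, f is g(w)/(w-z)^n with g holomorphic.\<close>
definition mero_on :: "complex set \<Rightarrow> (complex \<Rightarrow> complex) \<Rightarrow> bool" where
  "mero_on S f \<longleftrightarrow> (\<forall>z\<in>S. \<exists>r>0. ball z r \<subseteq> S \<and>
     (\<exists>(n::nat) g. g holomorphic_on ball z r \<and>
        (\<forall>w\<in>ball z r - {z}. f w = g w / (w - z) ^ n)))"

text \<open>Equality as meromorphic functions on S: agreement on a punctured neighbourhood of
  every point of S (i.e. outside a discrete closed subset of S).\<close>
definition meq :: "complex set \<Rightarrow> (complex \<Rightarrow> complex) \<Rightarrow> (complex \<Rightarrow> complex) \<Rightarrow> bool" where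
  "meq S f g \<longleftrightarrow> (\<forall>z\<in>S. eventually (\<lambda>w. f w = g w) (at z))"

text \<open>A subfield of the field of meromorphic functions on S, represented as the union of
  its equivalence classes (saturated w.r.t. meq).\<close>
definition mero_subfield :: "complex set \<Rightarrow> (complex \<Rightarrow> complex) set \<Rightarrow> bool" where
  "mero_subfield S F \<longleftrightarrow>
     F \<subseteq> {f. mero_on S f} \<and>
     (\<forall>f\<in>F. \<forall>g. mero_on S g \<and> meq S g f \<longrightarrow> g \<in> F) \<and>
     (\<lambda>_. 0) \<in> F \<and> (\<lambda>_. 1) \<in> F \<and>
     (\<forall>f\<in>F. \<forall>g\<in>F. (\<lambda>w. f w + g w) \<in> F \<and> (\<lambda>w. f w * g w) \<in> F) \<and>
     (\<forall>f\<in>F. (\<lambda>w. - f w) \<in> F) \<and>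
     (\<forall>f\<in>F. \<not> meq S f (\<lambda>_. 0) \<longrightarrow> (\<lambda>w. inverse (f w)) \<in> F)"

definition tau :: "(complex \<Rightarrow> complex) \<Rightarrow> complex \<Rightarrow> complex" where
  "tau f = (\<lambda>w. f (w + 1))"

definition tau_inv :: "(complex \<Rightarrow> complex) \<Rightarrow> complex \<Rightarrow> complex" where
  "tau_inv f = (\<lambda>w. f (w - 1))"

definition D1 :: "(complex \<Rightarrow> complex) \<Rightarrow> complex \<Rightarrow> complex" where
  "D1 f = deriv f"

definition setting1 :: "(complex \<Rightarrow> complex) set \<Rightarrow> bool" where
  "setting1 F \<longleftrightarrow> mero_subfield UNIV F \<and>
     (\<lambda>x. x) \<in> F \<and>
     (\<forall>p. mero_on UNIV p \<and> meq UNIV (tau p) p \<longrightarrow> p \<in> F) \<and>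
     (\<forall>f\<in>F. tau f \<in> F \<and> tau_inv f \<in> F \<and> D1 f \<in> F)"

definition sigq :: "complex \<Rightarrow> (complex \<Rightarrow> complex) \<Rightarrow> complex \<Rightarrow> complex" where
  "sigq q f = (\<lambda>w. f (q * w))"

definition sigq_inv :: "complex \<Rightarrow> (complex \<Rightarrow> complex) \<Rightarrow> complex \<Rightarrow> complex" where
  "sigq_inv q f = (\<lambda>w. f (w / q))"

definition D2 :: "(complex \<Rightarrow> complex) \<Rightarrow> complex \<Rightarrow> complex" where
  "D2 f = (\<lambda>w. w * deriv f w)"

definition setting2 :: "complex \<Rightarrow> (complex \<Rightarrow> complex) set \<Rightarrow> bool" where
  "setting2 q F \<longleftrightarrow> mero_subfield (- {0}) F \<and>
     (\<lambda>x. x) \<in> F \<and>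
     (\<forall>e. mero_on (- {0}) e \<and> meq (- {0}) (sigq q e) e \<longrightarrow> e \<in> F) \<and>
     (\<forall>f\<in>F. sigq q f \<in> F \<and> sigq_inv q f \<in> F \<and> D2 f \<in> F)"

text \<open>The family (D^k z_i), i<n, k>=0, is algebraically dependent over F: some nonzero
  polynomial (finitely many monomials alpha in the variables Y_(i,k), with coefficients in F)
  vanishes on it.\<close>
definition diff_alg_dependent ::
  "complex set \<Rightarrow> ((complex \<Rightarrow> complex) \<Rightarrow> complex \<Rightarrow> complex) \<Rightarrow> (complex \<Rightarrow> complex) set
   \<Rightarrow> nat \<Rightarrow> (nat \<Rightarrow> complex \<Rightarrow> complex) \<Rightarrow> bool" where
  "diff_alg_dependent S D F n z \<longleftrightarrow>
     (\<exists>(M :: (nat \<times> nat \<Rightarrow> nat) set) (m::nat) c.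
        finite M \<and> M \<subseteq> {\<alpha>. \<forall>i k. \<alpha> (i, k) \<noteq> 0 \<longrightarrow> i < n \<and> k \<le> m} \<and>
        (\<forall>\<alpha>\<in>M. c \<alpha> \<in> F) \<and> (\<exists>\<alpha>\<in>M. \<not> meq S (c \<alpha>) (\<lambda>_. 0)) \<and>
        meq S (\<lambda>w. \<Sum>\<alpha>\<in>M. c \<alpha> w *
                    (\<Prod>(i, k)\<in>{..<n} \<times> {..m}. ((D ^^ k) (z i) w) ^ \<alpha> (i, k)))
              (\<lambda>_. 0))"

definition telescoper_exists ::
  "complex set \<Rightarrow> ((complex \<Rightarrow> complex) \<Rightarrow> complex \<Rightarrow> complex)
   \<Rightarrow> ((complex \<Rightarrow> complex) \<Rightarrow> complex \<Rightarrow> complex) \<Rightarrow> (complex \<Rightarrow> complex) set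
   \<Rightarrow> nat \<Rightarrow> (nat \<Rightarrow> complex \<Rightarrow> complex) \<Rightarrow> bool" where
  "telescoper_exists S \<sigma> D F n a \<longleftrightarrow>
     (\<exists>(m::nat) (c :: nat \<Rightarrow> nat \<Rightarrow> complex \<Rightarrow> complex) f.
        (\<forall>i<n. \<forall>k\<le>m. c i k \<in> F \<and> meq S (\<sigma> (c i k)) (c i k)) \<and>
        (\<exists>i<n. \<exists>k\<le>m. \<not> meq S (c i k) (\<lambda>_. 0)) \<and>
        f \<in> F \<and>
        meq S (\<lambda>w. \<Sum>i<n. \<Sum>k\<le>m. c i k w * (D ^^ k) (a i) w)
              (\<lambda>w. \<sigma> f w - f w))"

end

theory Submission
  imports Defs "HOL-Library.Poly_Mapping" "HOL-Computational_Algebra.Polynomial" "HOL-Complex_Analysis.Complex_Analysis"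
begin

abbreviation "lk \<equiv> Poly_Mapping.lookup"
abbreviation "ks \<equiv> Poly_Mapping.keys"
abbreviation "sg \<equiv> Poly_Mapping.single"

definition mnm :: "('v \<Rightarrow>\<^sub>0 nat) \<Rightarrow> ('v \<Rightarrow> 'a::comm_ring_1) \<Rightarrow> 'a" where
  "mnm \<alpha> x = (\<Prod>v\<in>ks \<alpha>. x v ^ lk \<alpha> v)"

definition ev :: "(('v \<Rightarrow>\<^sub>0 nat) \<Rightarrow>\<^sub>0 'a) \<Rightarrow> ('v \<Rightarrow> 'a::comm_ring_1) \<Rightarrow> 'a" where
  "ev P x = (\<Sum>\<alpha>\<in>ks P. lk P \<alpha> * mnm \<alpha> x)"

lemma mono_alt:
  assumes "finite A" "ks \<alpha> \<subseteq> A"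
  shows "mnm \<alpha> x = (\<Prod>v\<in>A. x v ^ lk \<alpha> v)"
  unfolding mnm_def
  by (rule prod.mono_neutral_left) (use assms in \<open>auto simp: in_keys_iff\<close>)

lemma keys_add_nat: "ks (\<alpha> + \<beta> :: 'v \<Rightarrow>\<^sub>0 nat) = ks \<alpha> \<union> ks \<beta>"
  by (auto simp: in_keys_iff lookup_add)

lemma mono_add: "mnm (\<alpha> + \<beta>) x = mnm \<alpha> x * mnm \<beta> x"
proof -
  let ?A = "ks \<alpha> \<union> ks \<beta>"
  have "mnm (\<alpha> + \<beta>) x = (\<Prod>v\<in>?A. x v ^ lk (\<alpha>+\<beta>) v)"
    by (rule mono_alt) (auto simp: keys_add_nat)
  also have "\<dots> = (\<Prod>v\<in>?A. x v ^ lk \<alpha> v) * (\<Prod>v\<in>?A. x v ^ lk \<beta> v)"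
    by (simp add: lookup_add power_add prod.distrib)
  also have "\<dots> = mnm \<alpha> x * mnm \<beta> x"
    by (simp add: mono_alt[symmetric])
  finally show ?thesis .
qed

lemma mono_zero [simp]: "mnm 0 x = 1"
  by (simp add: mnm_def)

lemma ev_alt:
  assumes "finite A" "ks P \<subseteq> A"
  shows "ev P x = (\<Sum>\<alpha>\<in>A. lk P \<alpha> * mnm \<alpha> x)"
  unfolding ev_def
  by (rule sum.mono_neutral_left) (use assms in \<open>auto simp: in_keys_iff\<close>)

lemma ev_add: "ev (P + Q) x = ev P x + ev Q x"
proof -
  let ?A = "ks P \<union> ks Q"
  have "ev (P + Q) x = (\<Sum>\<alpha>\<in>?A. lk (P+Q) \<alpha> * mnm \<alpha> x)"
    by (rule ev_alt) (auto simp: keys_add)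
  also have "\<dots> = (\<Sum>\<alpha>\<in>?A. lk P \<alpha> * mnm \<alpha> x) + (\<Sum>\<alpha>\<in>?A. lk Q \<alpha> * mnm \<alpha> x)"
    by (simp add: lookup_add distrib_right sum.distrib)
  also have "\<dots> = ev P x + ev Q x"
    by (simp add: ev_alt[symmetric])
  finally show ?thesis .
qed

lemma ev_zero [simp]: "ev 0 x = 0"
  by (simp add: ev_def)

lemma ev_uminus: "ev (- P) x = - ev P x"
  using ev_add[of P "-P" x] by (simp add: eq_neg_iff_add_eq_0 add.commute)

lemma ev_diff: "ev (P - Q) x = ev P x - ev Q x"
  using ev_add[of "P - Q" Q x] by (simp add: algebra_simps)

lemma ev_sum: "ev (\<Sum>i\<in>I. P i) x = (\<Sum>i\<in>I. ev (P i) x)"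
  by (induction I rule: infinite_finite_induct) (auto simp: ev_add)

lemma ev_single [simp]: "ev (sg \<alpha> c) x = c * mnm \<alpha> x"
  by (subst ev_alt[of "{\<alpha>}"]) (auto simp: lookup_single)

lemma poly_mapping_expand: "P = (\<Sum>\<alpha>\<in>ks P. sg \<alpha> (lk P \<alpha>))"
  by (rule poly_mapping_eqI)
     (auto simp: lookup_sum lookup_single when_def in_keys_iff sum.delta' split: if_splits)

lemma ev_mult: "ev (P * Q) x = ev P x * ev Q x"
proof -
  have "P * Q = (\<Sum>\<alpha>\<in>ks P. \<Sum>\<beta>\<in>ks Q. sg \<alpha> (lk P \<alpha>) * sg \<beta> (lk Q \<beta>))"
    by (subst poly_mapping_expand[of P], subst poly_mapping_expand[of Q])
       (simp add: sum_distrib_left sum_distrib_right sum.swap[of _ "ks Q"])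
  hence "ev (P * Q) x = (\<Sum>\<alpha>\<in>ks P. \<Sum>\<beta>\<in>ks Q. lk P \<alpha> * mnm \<alpha> x * (lk Q \<beta> * mnm \<beta> x))"
    by (simp add: ev_sum mult_single mono_add mult_ac)
  also have "\<dots> = ev P x * ev Q x"
    by (simp add: ev_def sum_distrib_left sum_distrib_right sum.swap[of _ "ks Q"])
  finally show ?thesis .
qed

lemma ev_one [simp]: "ev 1 x = 1"
  using ev_single[of 0 1 x] by simp

lemma ev_power: "ev (P ^ n) x = ev P x ^ n"
  by (induction n) (auto simp: ev_mult)

lemma ev_prod: "ev (\<Prod>i\<in>I. P i) x = (\<Prod>i\<in>I. ev (P i) x)"
  by (induction I rule: infinite_finite_induct) (auto simp: ev_mult)

definition Xv :: "'v \<Rightarrow> ('v \<Rightarrow>\<^sub>0 nat) \<Rightarrow>\<^sub>0 'a::comm_ring_1" where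
  "Xv v = sg (sg v 1) 1"

definition Cc :: "'a \<Rightarrow> ('v \<Rightarrow>\<^sub>0 nat) \<Rightarrow>\<^sub>0 'a::comm_ring_1" where
  "Cc c = sg 0 c"

lemma ev_Xv [simp]: "ev (Xv v) x = x v"
  by (simp add: Xv_def mnm_def)

lemma ev_Cc [simp]: "ev (Cc c) x = c"
  by (simp add: Cc_def)

subsection \<open>Degree filtration\<close>

definition dg :: "('v \<Rightarrow>\<^sub>0 nat) \<Rightarrow> nat" where
  "dg \<alpha> = (\<Sum>v\<in>ks \<alpha>. lk \<alpha> v)"

lemma dg_alt:
  assumes "finite A" "ks \<alpha> \<subseteq> A"
  shows "dg \<alpha> = (\<Sum>v\<in>A. lk \<alpha> v)"
  unfolding dg_def
  by (rule sum.mono_neutral_left) (use assms in \<open>auto simp: in_keys_iff\<close>)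

lemma dg_add: "dg (\<alpha> + \<beta>) = dg \<alpha> + dg \<beta>"
proof -
  let ?A = "ks \<alpha> \<union> ks \<beta>"
  have "dg (\<alpha> + \<beta>) = (\<Sum>v\<in>?A. lk (\<alpha>+\<beta>) v)"
    by (rule dg_alt) (auto simp: keys_add_nat)
  also have "\<dots> = (\<Sum>v\<in>?A. lk \<alpha> v) + (\<Sum>v\<in>?A. lk \<beta> v)"
    by (simp add: lookup_add sum.distrib)
  also have "\<dots> = dg \<alpha> + dg \<beta>"
    by (simp add: dg_alt[symmetric])
  finally show ?thesis .
qed

lemma dg_zero [simp]: "dg 0 = 0"
  by (simp add: dg_def)

lemma dg_single [simp]: "dg (sg v k) = k"
  by (simp add: dg_def lookup_single)

definition LE :: "nat \<Rightarrow> (('v \<Rightarrow>\<^sub>0 nat) \<Rightarrow>\<^sub>0 'a::comm_ring_1) \<Rightarrow> bool" where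
  "LE d P \<longleftrightarrow> (\<forall>\<alpha>\<in>ks P. dg \<alpha> \<le> d)"

definition LT :: "nat \<Rightarrow> (('v \<Rightarrow>\<^sub>0 nat) \<Rightarrow>\<^sub>0 'a::comm_ring_1) \<Rightarrow> bool" where
  "LT d P \<longleftrightarrow> (\<forall>\<alpha>\<in>ks P. dg \<alpha> < d)"

lemma LE_add: "LE d P \<Longrightarrow> LE d Q \<Longrightarrow> LE d (P + Q)"
  using keys_add[of P Q] by (auto simp: LE_def)

lemma LT_add: "LT d P \<Longrightarrow> LT d Q \<Longrightarrow> LT d (P + Q)"
  using keys_add[of P Q] by (auto simp: LT_def)

lemma keys_uminus': "ks (- P) = ks P"
  by (auto simp: in_keys_iff)

lemma LE_uminus: "LE d P \<Longrightarrow> LE d (- P)"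
  by (auto simp: LE_def keys_uminus')

lemma LT_uminus: "LT d P \<Longrightarrow> LT d (- P)"
  by (auto simp: LT_def keys_uminus')

lemma LE_diff: "LE d P \<Longrightarrow> LE d Q \<Longrightarrow> LE d (P - Q)"
  using LE_add[of d P "-Q"] LE_uminus[of d Q] by simp

lemma LT_diff: "LT d P \<Longrightarrow> LT d Q \<Longrightarrow> LT d (P - Q)"
  using LT_add[of d P "-Q"] LT_uminus[of d Q] by simp

lemma LE_zero [simp]: "LE d 0" and LT_zero [simp]: "LT d 0"
  by (auto simp: LE_def LT_def)

lemma LE_sum: "(\<And>i. i \<in> I \<Longrightarrow> LE d (P i)) \<Longrightarrow> LE d (\<Sum>i\<in>I. P i)"
  by (induction I rule: infinite_finite_induct) (auto intro: LE_add)

lemma LT_sum: "(\<And>i. i \<in> I \<Longrightarrow> LT d (P i)) \<Longrightarrow> LT d (\<Sum>i\<in>I. P i)"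
  by (induction I rule: infinite_finite_induct) (auto intro: LT_add)

lemma LE_mult: "LE a P \<Longrightarrow> LE b Q \<Longrightarrow> LE (a + b) (P * Q)"
  using keys_mult[of P Q] by (fastforce simp: LE_def dg_add intro: add_mono)

lemma LT_mult: "LT a P \<Longrightarrow> LE b Q \<Longrightarrow> LT (a + b) (P * Q)"
  using keys_mult[of P Q] by (fastforce simp: LE_def LT_def dg_add intro: add_less_le_mono)

lemma LT_mult': "LE a P \<Longrightarrow> LT b Q \<Longrightarrow> LT (a + b) (P * Q)"
  using LT_mult[of b Q a P] by (simp add: mult.commute add.commute)

lemma LE_mono: "LE a P \<Longrightarrow> a \<le> b \<Longrightarrow> LE b P"
  by (auto simp: LE_def)

lemma LT_mono: "LT a P \<Longrightarrow> a \<le> b \<Longrightarrow> LT b P"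
  by (fastforce simp: LT_def)

lemma LT_imp_LE: "LT a P \<Longrightarrow> LE a P"
  by (auto simp: LT_def LE_def)

lemma LE_one [simp]: "LE 0 (1 :: ('v \<Rightarrow>\<^sub>0 nat) \<Rightarrow>\<^sub>0 'a::comm_ring_1)"
  by (simp add: LE_def)

lemma LE_Cc [simp]: "LE 0 (Cc c)"
  by (simp add: LE_def Cc_def)

lemma LE_Xv [simp]: "LE 1 (Xv v)"
  by (simp add: LE_def Xv_def)

lemma LT_Cc [simp]: "LT 1 (Cc c)"
  by (simp add: LT_def Cc_def)

lemma LE_prod:
  "(\<And>i. i \<in> A \<Longrightarrow> LE (k i) (p i)) \<Longrightarrow> LE (\<Sum>i\<in>A. k i) (\<Prod>i\<in>A. p i)"
proof (induction A rule: infinite_finite_induct)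
  case (insert a A)
  thus ?case by (simp add: LE_mult)
qed simp_all

lemma LT_prod_diff:
  assumes "finite A"
    and "\<And>i. i \<in> A \<Longrightarrow> LE (k i) (p i)" "\<And>i. i \<in> A \<Longrightarrow> LE (k i) (q i)"
    and "\<And>i. i \<in> A \<Longrightarrow> LT (k i) (p i - q i)"
  shows "LT (\<Sum>i\<in>A. k i) ((\<Prod>i\<in>A. p i) - (\<Prod>i\<in>A. q i))"
  using assms
proof (induction A rule: finite_induct)
  case (insert a A)
  have eq: "p a * prod p A - q a * prod q A = (p a - q a) * prod p A + q a * (prod p A - prod q A)"
    by (simp add: algebra_simps)
  have "LT (k a + sum k A) ((p a - q a) * prod p A)"
    by (rule LT_mult) (use insert in \<open>auto intro: LE_prod\<close>)
  moreover have "LT (k a + sum k A) (q a * (prod p A - prod q A))"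
    by (rule LT_mult') (use insert in auto)
  ultimately show ?case
    using insert by (simp add: eq LT_add)
qed simp

lemma LT_zero_iff: "LT 0 P \<longleftrightarrow> P = 0"
  by (auto simp: LT_def)

definition sh :: "('a \<Rightarrow> 'a) \<Rightarrow> ('v \<Rightarrow> 'a) \<Rightarrow> (('v \<Rightarrow>\<^sub>0 nat) \<Rightarrow>\<^sub>0 'a::comm_ring_1)
    \<Rightarrow> (('v \<Rightarrow>\<^sub>0 nat) \<Rightarrow>\<^sub>0 'a)" where
  "sh \<tau> c P = (\<Sum>\<alpha>\<in>ks P. Cc (\<tau> (lk P \<alpha>)) * (\<Prod>v\<in>ks \<alpha>. (Xv v + Cc (c v)) ^ lk \<alpha> v))"

lemma ev_sh: "ev (sh \<tau> c P) x = (\<Sum>\<alpha>\<in>ks P. \<tau> (lk P \<alpha>) * mnm \<alpha> (\<lambda>v. x v + c v))"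
  by (simp add: sh_def ev_sum ev_mult ev_prod ev_power ev_add mnm_def)

lemma sg_Suc: "sg v (Suc 0) + sg v k = sg v (Suc k)"
  by (simp add: single_add[symmetric])

lemma Cc_0 [simp]: "Cc 0 = 0"
  by (simp add: Cc_def)

lemma Xv_power: "Xv v ^ k = sg (sg v k) 1"
  by (induction k) (auto simp: Xv_def mult_single sg_Suc)

lemma LE1_Cc [simp]: "LE (Suc 0) (Cc c)"
  by (rule LE_mono[OF LE_Cc]) simp

lemma LE1_Xv [simp]: "LE (Suc 0) (Xv v)"
  using LE_Xv by simp

lemma LT1_Cc [simp]: "LT (Suc 0) (Cc c)"
  using LT_Cc by simp

lemma pw_LT: "LT k ((Xv v + Cc a) ^ k - Xv v ^ k)"
proof -
  have "LT (\<Sum>i<k. 1) ((\<Prod>i<k. Xv v + Cc a) - (\<Prod>i<k. Xv v))"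
    by (rule LT_prod_diff) (auto intro!: LE_add)
  thus ?thesis by simp
qed

lemma pw_LE: "LE k ((Xv v + Cc a) ^ k)"
proof -
  have "LE (\<Sum>i<k. 1) (\<Prod>i<k. Xv v + Cc a)"
    by (rule LE_prod) (auto intro!: LE_add)
  thus ?thesis by simp
qed

lemma pw_LE_X: "LE k (Xv v ^ k)"
  using pw_LE[of k v 0] by simp

lemma prod_single_one: "(\<Prod>v\<in>A. sg (f v) (1::'a::comm_ring_1)) = sg (\<Sum>v\<in>A. f v) 1"
  by (induction A rule: infinite_finite_induct) (auto simp: mult_single)

lemma prod_Xv: "(\<Prod>v\<in>ks \<alpha>. Xv v ^ lk \<alpha> v) = (sg \<alpha> 1 :: ('v \<Rightarrow>\<^sub>0 nat) \<Rightarrow>\<^sub>0 'a::comm_ring_1)"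
  by (simp add: Xv_power prod_single_one flip: poly_mapping_expand)

lemma Cc_mult_single: "Cc a * sg \<alpha> b = sg \<alpha> (a * b)"
  by (simp add: Cc_def mult_single)

lemma sh_zero_eq: "sh \<tau> (\<lambda>_. 0) P = (\<Sum>\<alpha>\<in>ks P. sg \<alpha> (\<tau> (lk P \<alpha>)))"
  by (simp add: sh_def prod_Xv Cc_mult_single)

lemma lookup_sh_zero:
  assumes "\<tau> 0 = 0"
  shows "lk (sh \<tau> (\<lambda>_. 0) P) \<beta> = \<tau> (lk P \<beta>)"
  using assms by (auto simp: sh_zero_eq lookup_sum lookup_single when_def in_keys_iff sum.delta)

lemma sh_diff_LT:
  assumes "LE d P"
  shows "LT d (sh \<tau> c P - sh \<tau> (\<lambda>_. 0) P)"
proof -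
  have "sh \<tau> c P - sh \<tau> (\<lambda>_. 0) P = (\<Sum>\<alpha>\<in>ks P. Cc (\<tau> (lk P \<alpha>)) *
        ((\<Prod>v\<in>ks \<alpha>. (Xv v + Cc (c v)) ^ lk \<alpha> v) - (\<Prod>v\<in>ks \<alpha>. (Xv v + Cc 0) ^ lk \<alpha> v)))"
    by (simp add: sh_def sum_subtractf right_diff_distrib)
  also have "LT d \<dots>"
  proof (rule LT_sum)
    fix \<alpha> assume \<alpha>: "\<alpha> \<in> ks P"
    note pw = pw_LT and pe = pw_LE pw_LE_X
    have "LT (dg \<alpha>) ((\<Prod>v\<in>ks \<alpha>. (Xv v + Cc (c v)) ^ lk \<alpha> v) - (\<Prod>v\<in>ks \<alpha>. (Xv v + Cc 0) ^ lk \<alpha> v))"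
      unfolding dg_def by (rule LT_prod_diff) (auto intro: pw pe)
    hence "LT (0 + dg \<alpha>) (Cc (\<tau> (lk P \<alpha>)) *
        ((\<Prod>v\<in>ks \<alpha>. (Xv v + Cc (c v)) ^ lk \<alpha> v) - (\<Prod>v\<in>ks \<alpha>. (Xv v + Cc 0) ^ lk \<alpha> v)))"
      by (intro LT_mult') auto
    moreover have "0 + dg \<alpha> \<le> d" using assms \<alpha> by (auto simp: LE_def)
    ultimately show "LT d (Cc (\<tau> (lk P \<alpha>)) *
        ((\<Prod>v\<in>ks \<alpha>. (Xv v + Cc (c v)) ^ lk \<alpha> v) - (\<Prod>v\<in>ks \<alpha>. (Xv v + Cc 0) ^ lk \<alpha> v)))"
      by (rule LT_mono)
  qed
  finally show ?thesis .
qed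


lemma sh_LE:
  assumes "LE d P"
  shows "LE d (sh \<tau> c P)"
  unfolding sh_def
proof (rule LE_sum)
  fix \<alpha> assume \<alpha>: "\<alpha> \<in> ks P"
  note pe = pw_LE
  have "LE (0 + dg \<alpha>) (Cc (\<tau> (lk P \<alpha>)) * (\<Prod>v\<in>ks \<alpha>. (Xv v + Cc (c v)) ^ lk \<alpha> v))"
    unfolding dg_def by (intro LE_mult LE_prod pe) auto
  moreover have "0 + dg \<alpha> \<le> d" using assms \<alpha> by (auto simp: LE_def)
  ultimately show "LE d (Cc (\<tau> (lk P \<alpha>)) * (\<Prod>v\<in>ks \<alpha>. (Xv v + Cc (c v)) ^ lk \<alpha> v))"
    by (rule LE_mono)
qed


subsection \<open>Vanishing on the natural grid\<close>

lemma mnm_upd: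
  assumes "j \<notin> ks \<beta>"
  shows "mnm \<beta> (x(j := t)) = mnm \<beta> x"
  unfolding mnm_def by (rule prod.cong) (use assms in auto)

lemma mnm_single: "mnm (sg j k) x = x j ^ k"
  by (simp add: mnm_def lookup_single)

lemma minus_single_add:
  "lk \<alpha> j = k \<Longrightarrow> (\<alpha> - sg j k) + sg j k = (\<alpha> :: 'v \<Rightarrow>\<^sub>0 nat)"
  by (rule poly_mapping_eqI) (auto simp: lookup_add lookup_minus lookup_single when_def)

lemma keys_minus_single:
  "lk \<alpha> j = k \<Longrightarrow> ks (\<alpha> - sg j k) \<subseteq> ks (\<alpha> :: 'v \<Rightarrow>\<^sub>0 nat) - {j}"
  by (auto simp: in_keys_iff lookup_minus lookup_single when_def split: if_splits)

lemma infinite_range_of_nat: "infinite (range (of_nat :: nat \<Rightarrow> 'a::semiring_char_0))"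
  using finite_imageD[of "of_nat :: nat \<Rightarrow> 'a" UNIV] inj_of_nat by auto

lemma grid_zero:
  fixes P :: "('v \<Rightarrow>\<^sub>0 nat) \<Rightarrow>\<^sub>0 'a::{idom, ring_char_0}"
  assumes "finite V" "\<forall>\<alpha>\<in>ks P. ks \<alpha> \<subseteq> V"
    "\<And>x. (\<forall>v. x v \<in> range of_nat) \<Longrightarrow> ev P x = 0"
  shows "P = 0"
  using assms
proof (induction V arbitrary: P rule: finite_induct)
  case empty
  hence ks: "ks P \<subseteq> {0}" by auto
  have "P = (\<Sum>\<alpha>\<in>ks P. sg \<alpha> (lk P \<alpha>))" by (rule poly_mapping_expand)
  also have "\<dots> = (\<Sum>\<alpha>\<in>{0}. sg \<alpha> (lk P \<alpha>))"
    by (rule sum.mono_neutral_left) (use ks in \<open>auto simp: in_keys_iff\<close>)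
  finally have P: "P = sg 0 (lk P 0)" by simp
  have "ev P (\<lambda>_. 0) = 0" by (rule empty.prems) (auto intro: range_eqI[of _ _ 0])
  hence "lk P 0 = 0" by (subst (asm) P) simp
  thus ?case using P by simp
next
  case (insert j A)
  define K where "K = (\<lambda>\<alpha>. lk \<alpha> j) ` ks P"
  define Pk where "Pk k = (\<Sum>\<alpha>\<in>{\<alpha>\<in>ks P. lk \<alpha> j = k}. sg (\<alpha> - sg j k) (lk P \<alpha>))" for k
  have finK: "finite K" by (simp add: K_def)
  have split: "P = (\<Sum>k\<in>K. Pk k * sg (sg j k) 1)"
  proof -
    have "P = (\<Sum>\<alpha>\<in>ks P. sg \<alpha> (lk P \<alpha>))" by (rule poly_mapping_expand)
    also have "\<dots> = (\<Sum>k\<in>K. \<Sum>\<alpha>\<in>{\<alpha>\<in>ks P. lk \<alpha> j = k}. sg \<alpha> (lk P \<alpha>))"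
      unfolding K_def by (rule sum.image_gen) simp
    also have "\<dots> = (\<Sum>k\<in>K. Pk k * sg (sg j k) 1)"
      unfolding Pk_def sum_distrib_right
      by (intro sum.cong refl) (auto simp: mult_single minus_single_add)
    finally show ?thesis .
  qed
  have ev_split: "ev P x = (\<Sum>k\<in>K. ev (Pk k) x * x j ^ k)" for x
    by (subst split) (simp add: ev_sum ev_mult mnm_single)
  have keysPk: "\<forall>\<beta>\<in>ks (Pk k). ks \<beta> \<subseteq> A" for k
  proof
    fix \<beta> assume "\<beta> \<in> ks (Pk k)"
    then obtain \<alpha> where \<alpha>: "\<alpha> \<in> ks P" "lk \<alpha> j = k" "\<beta> \<in> ks (sg (\<alpha> - sg j k) (lk P \<alpha>))"
      using keys_sum[of "\<lambda>\<alpha>. sg (\<alpha> - sg j k) (lk P \<alpha>)" "{\<alpha>\<in>ks P. lk \<alpha> j = k}"]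
      unfolding Pk_def by blast
    hence "\<beta> = \<alpha> - sg j k" by (auto split: if_splits)
    thus "ks \<beta> \<subseteq> A" using keys_minus_single[OF \<alpha>(2)] insert.prems(1) \<alpha>(1) by blast
  qed
  have indep: "ev (Pk k) (x(j := t)) = ev (Pk k) x" for k x t
  proof -
    have "j \<notin> ks \<beta>" if "\<beta> \<in> ks (Pk k)" for \<beta>
      using keysPk[of k] that insert.hyps(2) by blast
    thus ?thesis unfolding ev_def by (intro sum.cong refl) (simp add: mnm_upd)
  qed
  have Pk0: "Pk k = 0" if "k \<in> K" for k
  proof (rule insert.IH)
    show "\<forall>\<beta>\<in>ks (Pk k). ks \<beta> \<subseteq> A" by (rule keysPk)
  next
    fix x :: "'v \<Rightarrow> 'a" assume x: "\<forall>v. x v \<in> range of_nat"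
    define U where "U = (\<Sum>k\<in>K. monom (ev (Pk k) x) k)"
    have "poly U t = ev P (x(j := t))" for t
      by (simp add: U_def ev_split poly_sum poly_monom indep mult.commute)
    hence "range of_nat \<subseteq> {t. poly U t = 0}"
      using x by (auto intro!: insert.prems(2))
    hence "U = 0" using poly_roots_finite[of U] infinite_range_of_nat finite_subset by blast
    hence "coeff U k = 0" by simp
    thus "ev (Pk k) x = 0"
      using that finK by (simp add: U_def coeff_sum)
  qed
  show ?case by (subst split) (simp add: Pk0)
qed


lemma lookup_Cc_mult: "lk (Cc a * P) \<beta> = a * lk P \<beta>"
proof -
  have "Cc a * P = (\<Sum>\<alpha>\<in>ks P. sg \<alpha> (a * lk P \<alpha>))"
    by (subst poly_mapping_expand[of P]) (simp add: sum_distrib_left Cc_mult_single)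
  thus ?thesis
    by (auto simp: lookup_sum lookup_single when_def in_keys_iff sum.delta)
qed

lemma keys_Cc_mult: "a \<noteq> 0 \<Longrightarrow> ks (Cc a * P) = ks (P :: ('v \<Rightarrow>\<^sub>0 nat) \<Rightarrow>\<^sub>0 'a::field)"
  by (auto simp: in_keys_iff lookup_Cc_mult)

lemma dg_zero_iff: "dg \<alpha> = 0 \<longleftrightarrow> \<alpha> = 0"
proof
  assume "dg \<alpha> = 0"
  hence "\<forall>v\<in>ks \<alpha>. lk \<alpha> v = 0" by (simp add: dg_def)
  thus "\<alpha> = 0" by (auto simp: in_keys_iff intro: poly_mapping_eqI)
qed simp

lemma mnm_zero_point: "mnm \<alpha> (\<lambda>_. 0 :: 'a::comm_ring_1) = (if \<alpha> = 0 then 1 else 0)"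
proof (cases "\<alpha> = 0")
  case False
  then obtain v where "v \<in> ks \<alpha>" by (metis keys_eq_empty ex_in_conv)
  thus ?thesis using False unfolding mnm_def
    by (subst prod_zero) (auto simp: in_keys_iff zero_power intro!: bexI[of _ v])
qed simp

lemma ev_zero_point: "ev P (\<lambda>_. 0 :: 'a::comm_ring_1) = lk P 0"
  by (subst ev_alt[of "insert 0 (ks P)"]) (auto simp: mnm_zero_point if_distrib sum.delta cong: if_cong)

lemma LE0_eq_const:
  assumes "LE 0 P"
  shows "P = Cc (lk P 0)"
proof -
  have ks: "ks P \<subseteq> {0}" using assms by (auto simp: LE_def dg_zero_iff)
  have "P = (\<Sum>\<alpha>\<in>ks P. sg \<alpha> (lk P \<alpha>))" by (rule poly_mapping_expand)
  also have "\<dots> = (\<Sum>\<alpha>\<in>{0}. sg \<alpha> (lk P \<alpha>))"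
    by (rule sum.mono_neutral_left) (use ks in \<open>auto simp: in_keys_iff\<close>)
  finally show ?thesis by (simp add: Cc_def)
qed

lemma ev_cong_on:
  assumes "\<forall>\<alpha>\<in>ks P. ks \<alpha> \<subseteq> V" "\<And>v. v \<in> V \<Longrightarrow> x v = y v"
  shows "ev P x = ev P y"
  unfolding ev_def mnm_def
proof (intro sum.cong refl arg_cong2[where f = "(*)"] prod.cong)
  fix \<alpha> v assume "\<alpha> \<in> ks P" "v \<in> ks \<alpha>"
  hence "v \<in> V" using assms(1) by blast
  thus "x v ^ lk \<alpha> v = y v ^ lk \<alpha> v" using assms(2) by simp
qed

lemma sh_id_zero: "sh id (\<lambda>_. 0) P = P"
  by (rule poly_mapping_eqI) (simp add: lookup_sh_zero)

lemma ev_sh_id: "ev (sh id c P) x = ev P (\<lambda>v. x v + c v)"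
  unfolding ev_sh by (simp add: ev_def)

subsection \<open>The Ostrowski-type lemma\<close>

definition inF :: "'a set \<Rightarrow> (('v \<Rightarrow>\<^sub>0 nat) \<Rightarrow>\<^sub>0 'a::comm_ring_1) \<Rightarrow> bool" where
  "inF F P \<longleftrightarrow> (\<forall>\<alpha>. lk P \<alpha> \<in> F)"

definition onV :: "'v set \<Rightarrow> (('v \<Rightarrow>\<^sub>0 nat) \<Rightarrow>\<^sub>0 'a::comm_ring_1) \<Rightarrow> bool" where
  "onV V P \<longleftrightarrow> (\<forall>\<alpha>\<in>ks P. ks \<alpha> \<subseteq> V)"

lemma onV_add: "onV V P \<Longrightarrow> onV V Q \<Longrightarrow> onV V (P + Q)"
  using keys_add[of P Q] by (auto simp: onV_def)

lemma onV_uminus: "onV V P \<Longrightarrow> onV V (- P)"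
  by (auto simp: onV_def keys_uminus')

lemma onV_diff: "onV V P \<Longrightarrow> onV V Q \<Longrightarrow> onV V (P - Q)"
  using onV_add[of V P "-Q"] onV_uminus[of V Q] by simp

lemma onV_mult: "onV V P \<Longrightarrow> onV V Q \<Longrightarrow> onV V (P * Q)"
  using keys_mult[of P Q] by (fastforce simp: onV_def keys_add_nat)

lemma onV_sum: "(\<And>i. i \<in> I \<Longrightarrow> onV V (P i)) \<Longrightarrow> onV V (\<Sum>i\<in>I. P i)"
proof (induction I rule: infinite_finite_induct)
  case (insert i I) thus ?case by (auto intro!: onV_add)
qed (auto simp: onV_def)

lemma onV_one: "onV V 1"
  by (simp add: onV_def)

lemma onV_prod: "(\<And>i. i \<in> I \<Longrightarrow> onV V (P i)) \<Longrightarrow> onV V (\<Prod>i\<in>I. P i)"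
  by (induction I rule: infinite_finite_induct) (auto intro: onV_mult onV_one)

lemma onV_power: "onV V P \<Longrightarrow> onV V (P ^ n)"
  by (induction n) (auto intro: onV_mult onV_one)

lemma onV_Cc: "onV V (Cc c)"
  by (simp add: onV_def Cc_def)

lemma onV_Xv: "v \<in> V \<Longrightarrow> onV V (Xv v)"
  by (simp add: onV_def Xv_def)

lemma onV_sh: "onV V P \<Longrightarrow> onV V (sh \<tau> c P)"
  unfolding sh_def
  by (intro onV_sum onV_mult onV_Cc onV_prod onV_power onV_add onV_Xv) (auto simp: onV_def)

locale ostro =
  fixes F :: "'a::field_char_0 set" and \<sigma> :: "'a \<Rightarrow> 'a" and V :: "'v set" and w b :: "'v \<Rightarrow> 'a"
  assumes F0: "0 \<in> F" and F1: "1 \<in> F" and Fadd: "x \<in> F \<Longrightarrow> y \<in> F \<Longrightarrow> x + y \<in> F"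
    and Fmult: "x \<in> F \<Longrightarrow> y \<in> F \<Longrightarrow> x * y \<in> F" and Fneg: "x \<in> F \<Longrightarrow> - x \<in> F"
    and Finv: "x \<in> F \<Longrightarrow> inverse x \<in> F"
    and s_add: "\<sigma> (x + y) = \<sigma> x + \<sigma> y" and s_mult: "\<sigma> (x * y) = \<sigma> x * \<sigma> y"
    and s_one: "\<sigma> 1 = 1"
    and sF: "x \<in> F \<Longrightarrow> \<sigma> x \<in> F" and fixF: "\<sigma> x = x \<Longrightarrow> x \<in> F"
    and finV: "finite V" and bF: "v \<in> V \<Longrightarrow> b v \<in> F"
    and sw: "v \<in> V \<Longrightarrow> \<sigma> (w v) = w v + b v"
begin

lemma s_zero [simp]: "\<sigma> 0 = 0"
  using s_add[of 0 0] by simp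

lemma s_sum: "\<sigma> (\<Sum>i\<in>I. f i) = (\<Sum>i\<in>I. \<sigma> (f i))"
  by (induction I rule: infinite_finite_induct) (auto simp: s_add)

lemma s_prod: "\<sigma> (\<Prod>i\<in>I. f i) = (\<Prod>i\<in>I. \<sigma> (f i))"
  by (induction I rule: infinite_finite_induct) (auto simp: s_mult s_one)

lemma s_power: "\<sigma> (x ^ n) = \<sigma> x ^ n"
  by (induction n) (auto simp: s_mult s_one)

lemma s_uminus: "\<sigma> (- x) = - \<sigma> x"
  using s_add[of x "-x"] by (simp add: eq_neg_iff_add_eq_0 add.commute)

lemma s_diff: "\<sigma> (x - y) = \<sigma> x - \<sigma> y"
  using s_add[of x "-y"] by (simp add: s_uminus)

lemma Fsum: "(\<And>i. i \<in> I \<Longrightarrow> f i \<in> F) \<Longrightarrow> (\<Sum>i\<in>I. f i) \<in> F"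
  by (induction I rule: infinite_finite_induct) (auto intro: Fadd F0)

lemma Fdiff: "x \<in> F \<Longrightarrow> y \<in> F \<Longrightarrow> x - y \<in> F"
  using Fadd[of x "-y"] Fneg[of y] by simp

lemma inF_add: "inF F P \<Longrightarrow> inF F Q \<Longrightarrow> inF F (P + Q)"
  by (auto simp: inF_def lookup_add intro: Fadd)

lemma inF_uminus: "inF F P \<Longrightarrow> inF F (- P)"
  by (auto simp: inF_def intro: Fneg)

lemma inF_diff: "inF F P \<Longrightarrow> inF F Q \<Longrightarrow> inF F (P - Q)"
  by (auto simp: inF_def lookup_minus intro: Fdiff)

lemma inF_sg: "c \<in> F \<Longrightarrow> inF F (sg \<alpha> c)"
  by (auto simp: inF_def lookup_single when_def F0)

lemma inF_sum: "(\<And>i. i \<in> I \<Longrightarrow> inF F (P i)) \<Longrightarrow> inF F (\<Sum>i\<in>I. P i)"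
proof (induction I rule: infinite_finite_induct)
  case (insert i I) thus ?case by (auto intro!: inF_add)
qed (auto simp: inF_def F0)

lemma inF_mult: "inF F P \<Longrightarrow> inF F Q \<Longrightarrow> inF F (P * Q)"
proof -
  assume P: "inF F P" and Q: "inF F Q"
  have "P * Q = (\<Sum>\<alpha>\<in>ks P. \<Sum>\<beta>\<in>ks Q. sg (\<alpha> + \<beta>) (lk P \<alpha> * lk Q \<beta>))"
    by (subst poly_mapping_expand[of P], subst poly_mapping_expand[of Q])
       (simp add: sum_distrib_left sum_distrib_right sum.swap[of _ "ks Q"] mult_single)
  also have "inF F \<dots>"
    using P Q by (intro inF_sum inF_sg Fmult) (auto simp: inF_def)
  finally show ?thesis .
qed

lemma inF_one: "inF F 1"
  using inF_sg[of 1 0] F1 by simp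

lemma inF_prod: "(\<And>i. i \<in> I \<Longrightarrow> inF F (P i)) \<Longrightarrow> inF F (\<Prod>i\<in>I. P i)"
  by (induction I rule: infinite_finite_induct) (auto intro: inF_mult inF_one)

lemma inF_power: "inF F P \<Longrightarrow> inF F (P ^ n)"
  by (induction n) (auto intro: inF_mult inF_one)

lemma inF_Cc: "c \<in> F \<Longrightarrow> inF F (Cc c)"
  by (simp add: Cc_def inF_sg)

lemma inF_Xv: "inF F (Xv v)"
  by (simp add: Xv_def inF_sg F1)

lemma inF_sh:
  assumes "inF F P" "\<And>x. x \<in> F \<Longrightarrow> \<tau> x \<in> F" "onV V' P" "\<And>v. v \<in> V' \<Longrightarrow> c v \<in> F"
  shows "inF F (sh \<tau> c P)"
  unfolding sh_def
proof (intro inF_sum inF_mult inF_Cc inF_prod inF_power inF_add inF_Xv)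
  fix \<alpha> v assume "\<alpha> \<in> ks P" "v \<in> ks \<alpha>"
  hence "v \<in> V'" using assms(3) by (auto simp: onV_def)
  thus "c v \<in> F" by (rule assms(4))
next
  fix \<alpha> show "\<tau> (lk P \<alpha>) \<in> F" using assms(1,2) by (auto simp: inF_def)
qed

lemma s_ev: "\<sigma> (ev P x) = (\<Sum>\<alpha>\<in>ks P. \<sigma> (lk P \<alpha>) * mnm \<alpha> (\<lambda>v. \<sigma> (x v)))"
  by (simp add: ev_def s_sum s_mult s_prod s_power mnm_def)

definition II :: "(('v \<Rightarrow>\<^sub>0 nat) \<Rightarrow>\<^sub>0 'a) \<Rightarrow> bool" where
  "II P \<longleftrightarrow> inF F P \<and> onV V P \<and> ev P w = 0"

theorem ostrowski:
  assumes P0: "II P0" "P0 \<noteq> 0"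
  shows "\<exists>k. (\<forall>v\<in>V. \<sigma> (k v) = k v) \<and> (\<exists>v\<in>V. k v \<noteq> 0) \<and> (\<Sum>v\<in>V. k v * w v) \<in> F"
proof -
  define D where "D = {d. \<exists>P. II P \<and> P \<noteq> 0 \<and> LE d P}"
  have "LE (\<Sum>\<alpha>\<in>ks P0. dg \<alpha>) P0"
    unfolding LE_def by (auto intro: member_le_sum)
  hence "(\<Sum>\<alpha>\<in>ks P0. dg \<alpha>) \<in> D" using P0 unfolding D_def by blast
  define d where "d = (LEAST d. d \<in> D)"
  have dD: "d \<in> D" unfolding d_def using \<open>_ \<in> D\<close> by (rule LeastI)
  have dmin: "Q = 0" if "II Q" "LT d Q" for Q
  proof (rule ccontr)
    assume "Q \<noteq> 0"
    have "LE (d - 1) Q" using that(2) by (auto simp: LT_def LE_def)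
    with that \<open>Q \<noteq> 0\<close> have "d - 1 \<in> D"
      unfolding D_def by blast
    hence "d \<le> d - 1" unfolding d_def by (rule Least_le)
    moreover have "d > 0" using that \<open>Q \<noteq> 0\<close> LT_zero_iff[of Q] by (cases d) auto
    ultimately show False by simp
  qed
  define tt where "tt P = card {\<alpha>\<in>ks P. dg \<alpha> = d}" for P :: "('v \<Rightarrow>\<^sub>0 nat) \<Rightarrow>\<^sub>0 'a"
  obtain P where P: "II P" "P \<noteq> 0" "LE d P"
    and Pmin: "\<And>Q. II Q \<Longrightarrow> Q \<noteq> 0 \<Longrightarrow> LE d Q \<Longrightarrow> tt P \<le> tt Q"
  proof -
    from dD obtain Q where "II Q \<and> Q \<noteq> 0 \<and> LE d Q" unfolding D_def by blast
    from ex_has_least_nat[of "\<lambda>Q. II Q \<and> Q \<noteq> 0 \<and> LE d Q" Q tt, OF this] show ?thesis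
      using that by blast
  qed
  have d_pos: "d > 0"
  proof (rule ccontr)
    assume "\<not> d > 0"
    hence "LE 0 P" using P by simp
    hence Peq: "P = Cc (lk P 0)" by (rule LE0_eq_const)
    have "ev P w = lk P 0" by (subst Peq) simp
    with P have "lk P 0 = 0" by (simp add: II_def)
    with Peq P show False by simp
  qed
  obtain \<mu> where \<mu>: "\<mu> \<in> ks P" "dg \<mu> = d"
  proof (rule ccontr)
    assume "\<not> thesis"
    hence "LT d P" using P(3) that unfolding LE_def LT_def by force
    with P dmin show False by blast
  qed
  define c where "c = lk P \<mu>"
  have c: "c \<noteq> 0" "c \<in> F" using \<mu> P by (auto simp: c_def in_keys_iff II_def inF_def)
  define P' where "P' = Cc (inverse c) * P"
  have ksP': "ks P' = ks P" unfolding P'_def using c by (intro keys_Cc_mult) simp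
  have lkP': "lk P' \<beta> = inverse c * lk P \<beta>" for \<beta>
    by (simp add: P'_def lookup_Cc_mult)
  have P'1: "lk P' \<mu> = 1" using c by (simp add: lkP' c_def)
  have IIP': "II P'"
    using P c unfolding II_def P'_def
    by (auto intro!: inF_mult inF_Cc Finv onV_mult onV_Cc simp: ev_mult)
  have P'nz: "P' \<noteq> 0" using P'1 by auto
  have LEP': "LE d P'" using P(3) by (simp add: LE_def ksP')
  have ttP': "tt P' = tt P" by (simp add: tt_def ksP')
  define Q where "Q = sh \<sigma> b P' - P'"
  have sev: "\<sigma> (ev P' y) = ev (sh \<sigma> b P') y" if "\<And>v. v \<in> V \<Longrightarrow> \<sigma> (y v) = y v + b v" for y
  proof -
    have "\<sigma> (ev P' y) = (\<Sum>\<alpha>\<in>ks P'. \<sigma> (lk P' \<alpha>) * mnm \<alpha> (\<lambda>v. \<sigma> (y v)))" by (rule s_ev)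
    also have "\<dots> = (\<Sum>\<alpha>\<in>ks P'. \<sigma> (lk P' \<alpha>) * mnm \<alpha> (\<lambda>v. y v + b v))"
    proof (intro sum.cong refl arg_cong2[where f = "(*)"])
      fix \<alpha> assume "\<alpha> \<in> ks P'"
      hence "ks \<alpha> \<subseteq> V" using IIP' by (auto simp: II_def onV_def)
      thus "mnm \<alpha> (\<lambda>v. \<sigma> (y v)) = mnm \<alpha> (\<lambda>v. y v + b v)"
        unfolding mnm_def using that by (intro prod.cong refl) auto
    qed
    also have "\<dots> = ev (sh \<sigma> b P') y" by (simp add: ev_sh)
    finally show ?thesis .
  qed
  have IIQ: "II Q"
  proof -
    have "inF F Q" unfolding Q_def using IIP'
      by (intro inF_diff inF_sh) (auto simp: II_def intro: sF bF)
    moreover have "onV V Q" unfolding Q_def using IIP'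
      by (intro onV_diff onV_sh) (auto simp: II_def)
    moreover have "ev Q w = 0"
      using sev[of w] sw IIP' by (simp add: Q_def ev_diff II_def)
    ultimately show ?thesis by (simp add: II_def)
  qed
  have Q0: "Q = 0"
  proof (rule ccontr)
    assume Qnz: "Q \<noteq> 0"
    have LEQ: "LE d Q" unfolding Q_def by (intro LE_diff sh_LE LEP')
    have top: "lk Q \<beta> = \<sigma> (lk P' \<beta>) - lk P' \<beta>" if "dg \<beta> = d" for \<beta>
    proof -
      have "LT d (sh \<sigma> b P' - sh \<sigma> (\<lambda>_. 0) P')" by (rule sh_diff_LT[OF LEP'])
      hence "lk (sh \<sigma> b P' - sh \<sigma> (\<lambda>_. 0) P') \<beta> = 0"
        using that by (auto simp: LT_def in_keys_iff)
      thus ?thesis by (simp add: Q_def lookup_minus lookup_sh_zero)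
    qed
    have sub: "{\<beta>\<in>ks Q. dg \<beta> = d} \<subseteq> {\<beta>\<in>ks P'. dg \<beta> = d} - {\<mu>}"
    proof
      fix \<beta> assume \<beta>: "\<beta> \<in> {\<beta>\<in>ks Q. dg \<beta> = d}"
      hence "lk Q \<beta> \<noteq> 0" by (simp add: in_keys_iff)
      with top[of \<beta>] \<beta> have "\<sigma> (lk P' \<beta>) - lk P' \<beta> \<noteq> 0" by simp
      thus "\<beta> \<in> {\<beta>\<in>ks P'. dg \<beta> = d} - {\<mu>}"
        using \<beta> P'1 s_one by (auto simp: in_keys_iff)
    qed
    have "tt Q < tt P'"
      unfolding tt_def
    proof (rule le_less_trans[OF card_mono[OF _ sub]])
      show "card ({\<beta>\<in>ks P'. dg \<beta> = d} - {\<mu>}) < card {\<beta>\<in>ks P'. dg \<beta> = d}"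
        using \<mu> ksP' by (intro card_Diff1_less) auto
    qed auto
    with Pmin[OF IIQ Qnz LEQ] ttP' show False by simp
  qed
  have inv: "\<sigma> (ev P' y) = ev P' y" if "\<And>v. v \<in> V \<Longrightarrow> \<sigma> (y v) = y v + b v" for y
    using sev[OF that] Q0 by (simp add: Q_def)
  define e where "e j = (\<lambda>v. if v = j then 1 else 0 :: 'a)" for j :: 'v
  define k where "k j = ev P' (\<lambda>v. w v + e j v)" for j
  have kfix: "\<sigma> (k j) = k j" for j
    unfolding k_def
    by (rule inv) (auto simp: s_add sw e_def s_one)
  have kF: "k j \<in> F" for j using kfix by (rule fixF)
  have shift1: "ev P' (\<lambda>v. x v + e j v) = ev P' x + k j" if j: "j \<in> V" for j x
  proof -
    define Qj where "Qj = sh id (e j) P' - P' - Cc (k j)"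
    have "II Qj"
    proof -
      have "inF F Qj" unfolding Qj_def using IIP'
        by (intro inF_diff inF_sh[where V' = V] inF_Cc kF) (auto simp: II_def e_def F0 F1)
      moreover have "onV V Qj" unfolding Qj_def using IIP'
        by (intro onV_diff onV_sh onV_Cc) (auto simp: II_def)
      moreover have "ev Qj w = 0"
        using IIP' by (simp add: Qj_def ev_diff ev_sh_id k_def II_def)
      ultimately show ?thesis by (simp add: II_def)
    qed
    moreover have "LT d Qj"
    proof -
      have "LT d (sh id (e j) P' - sh id (\<lambda>_. 0) P')" by (rule sh_diff_LT[OF LEP'])
      hence "LT d (sh id (e j) P' - P')" by (simp add: sh_id_zero)
      moreover have "LT d (Cc (k j))" using d_pos LT_mono[OF LT1_Cc, of d] by simp
      ultimately show ?thesis unfolding Qj_def by (rule LT_diff)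
    qed
    ultimately have "Qj = 0" by (rule dmin)
    hence "ev Qj x = 0" by simp
    hence "ev P' (\<lambda>v. x v + e j v) - ev P' x - k j = 0" by (simp add: Qj_def ev_diff ev_sh_id)
    thus ?thesis by (simp add: algebra_simps)
  qed
  define c0 where "c0 = ev P' (\<lambda>_. 0)"
  have c0F: "c0 \<in> F" using IIP' by (simp add: c0_def ev_zero_point II_def inF_def)
  have shiftn: "ev P' (\<lambda>v. x v + of_nat n * e j v) = ev P' x + of_nat n * k j" if "j \<in> V" for j x n
  proof (induction n)
    case (Suc n)
    have "ev P' (\<lambda>v. x v + of_nat (Suc n) * e j v) = ev P' (\<lambda>v. (x v + of_nat n * e j v) + e j v)"
      by (simp add: algebra_simps)
    also have "\<dots> = ev P' (\<lambda>v. x v + of_nat n * e j v) + k j" by (rule shift1[OF that])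
    finally show ?case using Suc by (simp add: algebra_simps)
  qed simp
  have affine: "ev P' (\<lambda>v. if v \<in> A then of_nat (n v) else 0) = c0 + (\<Sum>j\<in>A. k j * of_nat (n j))"
    if "A \<subseteq> V" for A n
  proof -
    have "finite A" using that finV finite_subset by blast
    thus ?thesis using that
    proof (induction A rule: finite_induct)
      case empty thus ?case by (simp add: c0_def)
    next
      case (insert j A)
      have "(\<lambda>v. if v \<in> insert j A then of_nat (n v) else 0) =
            (\<lambda>v. (if v \<in> A then of_nat (n v) else 0) + of_nat (n j) * e j v)"
        using insert.hyps(2) by (auto simp: e_def)
      hence "ev P' (\<lambda>v. if v \<in> insert j A then of_nat (n v) else 0) =
             ev P' (\<lambda>v. if v \<in> A then of_nat (n v) else 0) + of_nat (n j) * k j"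
        using shiftn[of j] insert.prems by simp
      thus ?case using insert by (simp add: algebra_simps)
    qed
  qed
  define R where "R = P' - Cc c0 - (\<Sum>j\<in>V. Cc (k j) * Xv j)"
  have onVR: "onV V R" unfolding R_def using IIP'
    by (intro onV_diff onV_sum onV_mult onV_Cc onV_Xv) (auto simp: II_def)
  have evR: "ev R x = ev P' x - c0 - (\<Sum>j\<in>V. k j * x j)" for x
    by (simp add: R_def ev_diff ev_sum ev_mult)
  have "R = 0"
  proof (rule grid_zero[OF finV])
    show "\<forall>\<alpha>\<in>ks R. ks \<alpha> \<subseteq> V" using onVR by (simp add: onV_def)
  next
    fix x :: "'v \<Rightarrow> 'a" assume x: "\<forall>v. x v \<in> range of_nat"
    have "\<forall>v. \<exists>m. x v = of_nat m" using x by (auto simp: image_iff)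
    then obtain n where n: "\<And>v. x v = of_nat (n v)" by metis
    let ?y = "\<lambda>v. if v \<in> V then of_nat (n v) else (0::'a)"
    have "ev R x = ev R ?y"
      using onVR n by (intro ev_cong_on[of _ V]) (auto simp: onV_def)
    also have "\<dots> = 0"
      using affine[of V n] by (simp add: evR)
    finally show "ev R x = 0" .
  qed
  hence P'eq: "P' = Cc c0 + (\<Sum>j\<in>V. Cc (k j) * Xv j)" by (simp add: R_def algebra_simps)
  have "ev P' w = 0" using IIP' by (simp add: II_def)
  hence sumw: "(\<Sum>j\<in>V. k j * w j) = - c0"
    using evR[of w] \<open>R = 0\<close> by (simp add: eq_neg_iff_add_eq_0 algebra_simps)
  have "\<exists>j\<in>V. k j \<noteq> 0"
  proof (rule ccontr)
    assume nz: "\<not> (\<exists>j\<in>V. k j \<noteq> 0)"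
    hence "P' = Cc c0" using P'eq by simp
    moreover have "c0 = 0" using sumw nz by simp
    ultimately show False using P'nz by simp
  qed
  thus ?thesis using kfix sumw c0F Fneg by (intro exI[of _ k]) auto
qed

end


lemma mero_on_imp_meromorphic:
  assumes "mero_on S f"
  shows "f meromorphic_on S"
  unfolding meromorphic_on_meromorphic_at[of f S]
proof
  fix z assume z: "z \<in> S"
  from assms z obtain r n g where r: "r > 0" "ball z r \<subseteq> S" "g holomorphic_on ball z r"
    "\<forall>w\<in>ball z r - {z}. f w = g w / (w - z) ^ n"
    unfolding mero_on_def by blast
  have "g analytic_on ball z r" using r by (simp add: analytic_on_open)
  have "g analytic_on {z}" by (rule analytic_on_subset[OF \<open>g analytic_on ball z r\<close>]) (use r(1) in auto)
  hence "(\<lambda>w. g w / (w - z) ^ n) meromorphic_on {z}"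
    by (intro meromorphic_intros analytic_on_imp_meromorphic_on) auto
  moreover have "eventually (\<lambda>w. g w / (w - z) ^ n = f w) (at z)"
  proof -
    have "eventually (\<lambda>w. w \<in> ball z r - {z}) (at z)"
      using r by (intro eventually_at_in_open) auto
    thus ?thesis by eventually_elim (use r in auto)
  qed
  ultimately show "f meromorphic_on {z}"
    using meromorphic_on_cong[of "{z}" "\<lambda>w. g w / (w - z) ^ n" f "{z}"] by auto
qed

lemma meromorphic_imp_mero_on:
  assumes "f meromorphic_on S" "open S"
  shows "mero_on S f"
  unfolding mero_on_def
proof
  fix z assume z: "z \<in> S"
  have iso: "isolated_singularity_at f z" and ne: "not_essential f z"
    using assms z meromorphic_at_iff meromorphic_on_meromorphic_at by blast+
  obtain r0 where r0: "r0 > 0" "f analytic_on ball z r0 - {z}"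
    using iso by (auto simp: isolated_singularity_at_def)
  obtain r1 where r1: "r1 > 0" "ball z r1 \<subseteq> S"
    using assms(2) z openE by blast
  define r2 where "r2 = min r0 r1"
  have r2: "r2 > 0" "ball z r2 \<subseteq> S" "f analytic_on ball z r2 - {z}"
    using r0 r1 unfolding r2_def by (auto elim: analytic_on_subset)
  show "\<exists>r>0. ball z r \<subseteq> S \<and> (\<exists>n g. g holomorphic_on ball z r \<and> (\<forall>w\<in>ball z r - {z}. f w = g w / (w - z) ^ n))"
  proof (cases "is_pole f z")
    case True
    have "f holomorphic_on ball z r2 - {z}" using r2 by (simp add: analytic_imp_holomorphic)
    from zorder_exist_pole[OF this _ _ True] r2 obtain r where
      r: "r > 0" "cball z r \<subseteq> ball z r2" "zor_poly f z holomorphic_on cball z r"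
      "\<forall>w\<in>cball z r - {z}. f w = zor_poly f z w / (w - z) ^ nat (- zorder f z)"
      by auto
    have "ball z r \<subseteq> S" using r r2 ball_subset_cball[of z r] by blast
    show ?thesis
      using r r2 ball_subset_cball[of z r] \<open>ball z r \<subseteq> S\<close>
      by (intro exI[of _ r] conjI exI[of _ "nat (- zorder f z)"] exI[of _ "zor_poly f z"])
         (auto intro: holomorphic_on_subset)
  next
    case False
    then obtain c where c: "f \<midarrow>z\<rightarrow> c" using ne by (auto simp: not_essential_def)
    have "remove_sings f analytic_on {z}" by (rule remove_sings_analytic_at[OF iso c])
    then obtain r3 where r3: "r3 > 0" "remove_sings f holomorphic_on ball z r3"
      by (auto simp: analytic_on_def)
    define r where "r = min r2 r3"
    have eq: "f w = remove_sings f w" if "w \<in> ball z r - {z}" for w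
    proof -
      have "f analytic_on {w}" by (rule analytic_on_subset[OF r2(3)]) (use that in \<open>auto simp: r_def\<close>)
      thus ?thesis by simp
    qed
    show ?thesis
      using r2 r3 eq unfolding r_def
      by (intro exI[of _ "min r2 r3"] conjI exI[of _ "0::nat"] exI[of _ "remove_sings f"])
         (auto intro: holomorphic_on_subset simp: r_def)
  qed
qed

lemma mero_on_iff: "open S \<Longrightarrow> mero_on S f \<longleftrightarrow> f meromorphic_on S"
  using mero_on_imp_meromorphic meromorphic_imp_mero_on by blast

lemma meq_refl: "meq S f f"
  by (simp add: meq_def)

lemma meq_sym: "meq S f g \<Longrightarrow> meq S g f"
  unfolding meq_def by (metis (mono_tags, lifting) eventually_mono)

lemma meq_trans: "meq S f g \<Longrightarrow> meq S g h \<Longrightarrow> meq S f h"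
  unfolding meq_def
proof
  fix z assume "\<forall>z\<in>S. eventually (\<lambda>w. f w = g w) (at z)" "\<forall>z\<in>S. eventually (\<lambda>w. g w = h w) (at z)" "z \<in> S"
  hence e1: "eventually (\<lambda>w. f w = g w) (at z)" and e2: "eventually (\<lambda>w. g w = h w) (at z)" by auto
  from e1 e2 show "eventually (\<lambda>w. f w = h w) (at z)" by eventually_elim simp
qed

lemma meq_pointwise: "(\<And>w. f w = g w) \<Longrightarrow> meq S f g"
  by (simp add: meq_def)

lemma mero_nonzero:
  assumes "f meromorphic_on S" "open S" "connected S" "\<not> meq S f (\<lambda>_. 0)" "z \<in> S"
  shows "eventually (\<lambda>w. f w \<noteq> 0) (at z)"
proof -
  from meromorphic_imp_constant_or_avoid[OF assms(1-3), of 0]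
  have "eventually (\<lambda>z. f z = 0) (cosparse S) \<or> eventually (\<lambda>z. f z \<noteq> 0) (cosparse S)" .
  moreover have "\<not> eventually (\<lambda>z. f z = 0) (cosparse S)"
    using assms(4) by (simp add: eventually_cosparse_open_eq[OF assms(2)] meq_def)
  ultimately have "eventually (\<lambda>z. f z \<noteq> 0) (cosparse S)" by blast
  thus ?thesis
    using assms(5) by (simp add: eventually_cosparse_open_eq[OF assms(2)])
qed

definition mrel :: "complex set \<Rightarrow> (complex \<Rightarrow> complex) \<Rightarrow> (complex \<Rightarrow> complex) \<Rightarrow> bool" where
  "mrel S f g \<longleftrightarrow> f meromorphic_on S \<and> g meromorphic_on S \<and> meq S f g"

lemma part_equivp_mrel: "part_equivp (mrel S)"
proof (rule part_equivpI)
  show "\<exists>x. mrel S x x" by (rule exI[of _ "\<lambda>_. 0"]) (auto simp: mrel_def meq_def)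
  show "symp (mrel S)" by (auto simp: symp_def mrel_def intro: meq_sym)
  show "transp (mrel S)" by (auto simp: transp_def mrel_def intro: meq_trans)
qed


lemma ev_at_all: "S \<noteq> {} \<Longrightarrow> \<not> meq S (\<lambda>_. a) (\<lambda>_. b) \<longleftrightarrow> a \<noteq> b"
  by (auto simp: meq_def trivial_limit_at)

lemma mrel_add: "mrel S f f' \<Longrightarrow> mrel S g g' \<Longrightarrow> mrel S (\<lambda>w. f w + g w) (\<lambda>w. f' w + g' w)"
proof -
  assume 1: "mrel S f f'" and 2: "mrel S g g'"
  have "meq S (\<lambda>w. f w + g w) (\<lambda>w. f' w + g' w)" unfolding meq_def
  proof
    fix z assume "z \<in> S"
    hence "eventually (\<lambda>w. f w = f' w) (at z)" "eventually (\<lambda>w. g w = g' w) (at z)"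
      using 1 2 by (auto simp: mrel_def meq_def)
    thus "eventually (\<lambda>w. f w + g w = f' w + g' w) (at z)" by eventually_elim simp
  qed
  thus ?thesis using 1 2 by (auto simp: mrel_def intro!: meromorphic_intros)
qed

lemma mrel_mult: "mrel S f f' \<Longrightarrow> mrel S g g' \<Longrightarrow> mrel S (\<lambda>w. f w * g w) (\<lambda>w. f' w * g' w)"
proof -
  assume 1: "mrel S f f'" and 2: "mrel S g g'"
  have "meq S (\<lambda>w. f w * g w) (\<lambda>w. f' w * g' w)" unfolding meq_def
  proof
    fix z assume "z \<in> S"
    hence "eventually (\<lambda>w. f w = f' w) (at z)" "eventually (\<lambda>w. g w = g' w) (at z)"
      using 1 2 by (auto simp: mrel_def meq_def)
    thus "eventually (\<lambda>w. f w * g w = f' w * g' w) (at z)" by eventually_elim simp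
  qed
  thus ?thesis using 1 2 by (auto simp: mrel_def intro!: meromorphic_intros)
qed

lemma mrel_uminus: "mrel S f f' \<Longrightarrow> mrel S (\<lambda>w. - f w) (\<lambda>w. - f' w)"
  unfolding mrel_def meq_def
  by (auto intro!: meromorphic_intros elim!: ballE eventually_mono)

lemma mrel_inverse: "mrel S f f' \<Longrightarrow> mrel S (\<lambda>w. inverse (f w)) (\<lambda>w. inverse (f' w))"
  unfolding mrel_def meq_def
  by (auto intro!: meromorphic_intros elim!: ballE eventually_mono)

lemma mrel_const: "mrel S (\<lambda>_. c) (\<lambda>_. c)"
  by (auto simp: mrel_def meq_def)

lemma mrel_pw: "f meromorphic_on S \<Longrightarrow> (\<And>w. f w = g w) \<Longrightarrow> mrel S f g"
proof -
  assume "f meromorphic_on S" "\<And>w. f w = g w"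
  moreover hence "f = g" by auto
  ultimately show "mrel S f g" by (simp add: mrel_def meq_def)
qed

lemma mrel_inv_mult:
  assumes "open S" "connected S" "mrel S f f" "\<not> mrel S f (\<lambda>_. 0)"
  shows "mrel S (\<lambda>w. inverse (f w) * f w) (\<lambda>_. 1)"
proof -
  have f: "f meromorphic_on S" using assms(3) by (simp add: mrel_def)
  hence nz: "\<not> meq S f (\<lambda>_. 0)" using assms(4) by (simp add: mrel_def meromorphic_on_const)
  have "meq S (\<lambda>w. inverse (f w) * f w) (\<lambda>_. 1)"
    unfolding meq_def
  proof
    fix z assume "z \<in> S"
    from mero_nonzero[OF f assms(1,2) nz this]
    show "eventually (\<lambda>w. inverse (f w) * f w = 1) (at z)"
      by eventually_elim simp
  qed
  thus ?thesis using f by (auto simp: mrel_def intro!: meromorphic_intros)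
qed

lemma connected_Cstar: "connected (- {0 :: complex})"
  by (simp add: connected_punctured_universe)


lemma ev_affine:
  fixes c1 c0 z :: complex
  assumes "c1 \<noteq> 0" "eventually P (at (c1 * z + c0))"
  shows "eventually (\<lambda>w. P (c1 * w + c0)) (at z)"
proof -
  have "filterlim (\<lambda>w. c1 * w + c0) (at (c1 * z + c0)) (at z)"
    unfolding filterlim_at
  proof
    show "eventually (\<lambda>w. c1 * w + c0 \<in> UNIV \<and> c1 * w + c0 \<noteq> c1 * z + c0) (at z)"
    proof -
      have inj: "x = z" if "c1 * x + c0 = c1 * z + c0" for x
        using that assms(1) by simp
      show ?thesis using inj by (auto simp: eventually_at_filter intro!: always_eventually)
    qed
    show "((\<lambda>w. c1 * w + c0) \<longlongrightarrow> c1 * z + c0) (at z)"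
      by (intro tendsto_intros)
  qed
  thus ?thesis using assms(2) by (simp add: filterlim_iff)
qed

lemma meq_affine:
  assumes "c1 \<noteq> 0" "\<And>w. w \<in> S \<Longrightarrow> c1 * w + c0 \<in> S" "meq S f g"
  shows "meq S (\<lambda>w. f (c1 * w + c0)) (\<lambda>w. g (c1 * w + c0))"
  unfolding meq_def
proof
  fix z assume "z \<in> S"
  hence "eventually (\<lambda>w. f w = g w) (at (c1 * z + c0))" using assms by (auto simp: meq_def)
  thus "eventually (\<lambda>w. f (c1 * w + c0) = g (c1 * w + c0)) (at z)"
    using ev_affine[OF assms(1), of "\<lambda>w. f w = g w"] by simp
qed

lemma mero_affine:
  assumes "f meromorphic_on S" "\<And>w. w \<in> S \<Longrightarrow> c1 * w + c0 \<in> S"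
  shows "(\<lambda>w. f (c1 * w + c0)) meromorphic_on S"
  by (rule meromorphic_on_compose[OF assms(1)]) (use assms(2) in \<open>auto intro!: analytic_intros\<close>)

lemma mero_ev_analytic:
  assumes "f meromorphic_on S" "z \<in> S"
  shows "eventually (\<lambda>w. f analytic_on {w}) (at z)"
proof -
  have "f meromorphic_on {z}" using assms(2) by (intro meromorphic_on_subset[OF assms(1)]) simp
  hence "isolated_singularity_at f z" by (rule meromorphic_on_isolated_singularity)
  then obtain r where r: "r > 0" "f analytic_on ball z r - {z}"
    by (auto simp: isolated_singularity_at_def)
  have "eventually (\<lambda>w. w \<in> ball z r - {z}) (at z)"
    using r by (intro eventually_at_in_open) auto
  thus ?thesis by eventually_elim (use r in \<open>auto intro: analytic_on_subset\<close>)
qed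

lemma ev_at_deriv:
  assumes "eventually (\<lambda>w. f w = g w) (at z)"
  shows "eventually (\<lambda>w. deriv f w = deriv g w) (at z)"
proof -
  obtain U where U: "open U" "z \<in> U" "\<And>w. w \<in> U \<Longrightarrow> w \<noteq> z \<Longrightarrow> f w = g w"
    using assms unfolding eventually_at_topological by blast
  have "eventually (\<lambda>w. w \<in> U - {z}) (at z)"
    using U by (intro eventually_at_in_open) auto
  thus ?thesis
  proof eventually_elim
    case (elim w)
    have "eventually (\<lambda>x. x \<in> U - {z}) (nhds w)"
      using elim U by (intro eventually_nhds_in_open) auto
    hence "eventually (\<lambda>x. f x = g x) (nhds w)" by eventually_elim (use U in auto)
    thus ?case by (rule deriv_cong_ev) simp
  qed
qed

lemma meq_deriv: "meq S f g \<Longrightarrow> meq S (deriv f) (deriv g)"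
  unfolding meq_def using ev_at_deriv by blast

lemma meq_deriv_add:
  assumes "f meromorphic_on S" "g meromorphic_on S"
  shows "meq S (deriv (\<lambda>w. f w + g w)) (\<lambda>w. deriv f w + deriv g w)"
  unfolding meq_def
proof
  fix z assume z: "z \<in> S"
  from mero_ev_analytic[OF assms(1) z] mero_ev_analytic[OF assms(2) z]
  show "eventually (\<lambda>w. deriv (\<lambda>w. f w + g w) w = deriv f w + deriv g w) (at z)"
    by eventually_elim (auto intro!: deriv_add analytic_on_imp_differentiable_at)
qed

lemma meq_deriv_affine:
  assumes "f meromorphic_on S" "c1 \<noteq> 0" "\<And>w. w \<in> S \<Longrightarrow> c1 * w + c0 \<in> S"
  shows "meq S (deriv (\<lambda>x. f (c1 * x + c0))) (\<lambda>w. c1 * deriv f (c1 * w + c0))"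
  unfolding meq_def
proof
  fix z assume z: "z \<in> S"
  have "eventually (\<lambda>w. f analytic_on {w}) (at (c1 * z + c0))"
    using assms z by (intro mero_ev_analytic) auto
  from ev_affine[OF assms(2) this]
  show "eventually (\<lambda>w. deriv (\<lambda>x. f (c1 * x + c0)) w = c1 * deriv f (c1 * w + c0)) (at z)"
  proof eventually_elim
    case (elim w)
    hence "DERIV f (c1 * w + c0) :> deriv f (c1 * w + c0)"
      by (simp add: DERIV_deriv_iff_field_differentiable analytic_on_imp_differentiable_at)
    moreover have "((\<lambda>x. c1 * x + c0) has_field_derivative c1) (at w)"
      by (auto intro!: derivative_eq_intros)
    moreover have "((\<lambda>x. f (c1 * x + c0)) has_field_derivative deriv f (c1 * w + c0) * c1) (at w)"
      using DERIV_chain[OF calculation(1) calculation(2)] by (simp add: o_def)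
    thus ?case by (simp add: DERIV_imp_deriv mult.commute)
  qed
qed


locale mframe =
  fixes S :: "complex set" and Ab :: "(complex \<Rightarrow> complex) \<Rightarrow> 'a::field_char_0"
    and sf :: "(complex \<Rightarrow> complex) \<Rightarrow> complex \<Rightarrow> complex"
    and Df :: "(complex \<Rightarrow> complex) \<Rightarrow> complex \<Rightarrow> complex"
    and sq :: "'a \<Rightarrow> 'a" and Dq :: "'a \<Rightarrow> 'a" and F :: "(complex \<Rightarrow> complex) set"
  assumes openS: "open S"
    and Ab_eq: "f meromorphic_on S \<Longrightarrow> g meromorphic_on S \<Longrightarrow> Ab f = Ab g \<longleftrightarrow> meq S f g"
    and Ab_cases: "\<exists>f. f meromorphic_on S \<and> x = Ab f"
    and Ab_add: "f meromorphic_on S \<Longrightarrow> g meromorphic_on S \<Longrightarrow> Ab (\<lambda>w. f w + g w) = Ab f + Ab g"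
    and Ab_mult: "f meromorphic_on S \<Longrightarrow> g meromorphic_on S \<Longrightarrow> Ab (\<lambda>w. f w * g w) = Ab f * Ab g"
    and Ab_uminus: "f meromorphic_on S \<Longrightarrow> Ab (\<lambda>w. - f w) = - Ab f"
    and Ab_inverse: "f meromorphic_on S \<Longrightarrow> Ab (\<lambda>w. inverse (f w)) = inverse (Ab f)"
    and Ab_zero: "Ab (\<lambda>_. 0) = 0" and Ab_one: "Ab (\<lambda>_. 1) = 1"
    and sf_mero: "f meromorphic_on S \<Longrightarrow> sf f meromorphic_on S"
    and sq_Ab: "f meromorphic_on S \<Longrightarrow> sq (Ab f) = Ab (sf f)"
    and sq_add: "sq (x + y) = sq x + sq y" and sq_mult: "sq (x * y) = sq x * sq y"
    and sq_one: "sq 1 = 1"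
    and Df_mero: "f meromorphic_on S \<Longrightarrow> Df f meromorphic_on S"
    and Dq_Ab: "f meromorphic_on S \<Longrightarrow> Dq (Ab f) = Ab (Df f)"
    and Dq_add: "Dq (x + y) = Dq x + Dq y" and Dq_sq: "Dq (sq x) = sq (Dq x)"
    and Fsub: "mero_subfield S F"
    and F_sf: "f \<in> F \<Longrightarrow> sf f \<in> F" and F_Df: "f \<in> F \<Longrightarrow> Df f \<in> F"
    and F_fix: "p meromorphic_on S \<Longrightarrow> meq S (sf p) p \<Longrightarrow> p \<in> F"
begin

lemma F_mero: "f \<in> F \<Longrightarrow> f meromorphic_on S"
  using Fsub openS by (auto simp: mero_subfield_def mero_on_iff)

lemma F_sat: "f \<in> F \<Longrightarrow> g meromorphic_on S \<Longrightarrow> meq S g f \<Longrightarrow> g \<in> F"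
  using Fsub openS by (auto simp: mero_subfield_def mero_on_iff)

lemma F0: "(\<lambda>_. 0) \<in> F" and F1: "(\<lambda>_. 1) \<in> F"
  using Fsub by (auto simp: mero_subfield_def)

lemma F_add: "f \<in> F \<Longrightarrow> g \<in> F \<Longrightarrow> (\<lambda>w. f w + g w) \<in> F"
  and F_mult: "f \<in> F \<Longrightarrow> g \<in> F \<Longrightarrow> (\<lambda>w. f w * g w) \<in> F"
  and F_uminus: "f \<in> F \<Longrightarrow> (\<lambda>w. - f w) \<in> F"
  and F_inv: "f \<in> F \<Longrightarrow> \<not> meq S f (\<lambda>_. 0) \<Longrightarrow> (\<lambda>w. inverse (f w)) \<in> F"
  using Fsub by (auto simp: mero_subfield_def)

lemma Ab_diff: "f meromorphic_on S \<Longrightarrow> g meromorphic_on S \<Longrightarrow> Ab (\<lambda>w. f w - g w) = Ab f - Ab g"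
  using Ab_add[of f "\<lambda>w. - g w"] Ab_uminus[of g] by (simp add: meromorphic_intros)

lemma Ab_sum: "(\<And>i. i \<in> I \<Longrightarrow> f i meromorphic_on S) \<Longrightarrow> Ab (\<lambda>w. \<Sum>i\<in>I. f i w) = (\<Sum>i\<in>I. Ab (f i))"
proof (induction I rule: infinite_finite_induct)
  case (insert i I)
  thus ?case by (simp add: Ab_add meromorphic_intros)
qed (simp_all add: Ab_zero)

lemma Ab_prod: "(\<And>i. i \<in> I \<Longrightarrow> f i meromorphic_on S) \<Longrightarrow> Ab (\<lambda>w. \<Prod>i\<in>I. f i w) = (\<Prod>i\<in>I. Ab (f i))"
proof (induction I rule: infinite_finite_induct)
  case (insert i I)
  thus ?case by (simp add: Ab_mult meromorphic_intros)
qed (simp_all add: Ab_one)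

lemma Ab_power: "f meromorphic_on S \<Longrightarrow> Ab (\<lambda>w. f w ^ n) = Ab f ^ n"
  by (induction n) (simp_all add: Ab_mult Ab_one meromorphic_intros)

lemma Ab_zero_iff: "f meromorphic_on S \<Longrightarrow> Ab f = 0 \<longleftrightarrow> meq S f (\<lambda>_. 0)"
  using Ab_eq[of f "\<lambda>_. 0"] by (simp add: Ab_zero meromorphic_on_const)

lemma sq_zero: "sq 0 = 0"
  using sq_add[of 0 0] by simp

lemma sq_uminus: "sq (- x) = - sq x"
  using sq_add[of x "-x"] by (simp add: sq_zero eq_neg_iff_add_eq_0 add.commute)

lemma sq_diff: "sq (x - y) = sq x - sq y"
  using sq_add[of x "-y"] by (simp add: sq_uminus)

lemma sq_sum: "sq (\<Sum>i\<in>I. f i) = (\<Sum>i\<in>I. sq (f i))"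
  by (induction I rule: infinite_finite_induct) (auto simp: sq_add sq_zero)

lemma Dq_zero: "Dq 0 = 0"
  using Dq_add[of 0 0] by simp

lemma Dqk_add: "(Dq ^^ k) (x + y) = (Dq ^^ k) x + (Dq ^^ k) y"
  by (induction k) (auto simp: Dq_add)

lemma Dqk_sq: "(Dq ^^ k) (sq x) = sq ((Dq ^^ k) x)"
  by (induction k) (auto simp: Dq_sq)

lemma Dfk_mero: "f meromorphic_on S \<Longrightarrow> (Df ^^ k) f meromorphic_on S"
  by (induction k) (auto intro: Df_mero)

lemma Dqk_Ab: "f meromorphic_on S \<Longrightarrow> (Dq ^^ k) (Ab f) = Ab ((Df ^^ k) f)"
  by (induction k) (auto simp: Dq_Ab Dfk_mero)

lemma Dfk_F: "f \<in> F \<Longrightarrow> (Df ^^ k) f \<in> F"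
  by (induction k) (auto intro: F_Df)

definition FL :: "'a set" where "FL = Ab ` F"

lemma FL_ostro: "ostro FL sq V W B" if "finite V" "\<And>v. v \<in> V \<Longrightarrow> B v \<in> FL"
  "\<And>v. v \<in> V \<Longrightarrow> sq (W v) = W v + B v"
proof
  have FL0: "0 \<in> FL" using F0 by (auto simp: FL_def Ab_zero intro: image_eqI[of _ _ "\<lambda>_. 0"])
  thus "0 \<in> FL" .
  show "1 \<in> FL" using F1 by (auto simp: FL_def Ab_one intro: image_eqI[of _ _ "\<lambda>_. 1"])
  fix x y assume "x \<in> FL" "y \<in> FL"
  then obtain f g where fg: "f \<in> F" "g \<in> F" "x = Ab f" "y = Ab g" by (auto simp: FL_def)
  show "x + y \<in> FL" unfolding FL_def using fg
    by (intro image_eqI[of _ _ "\<lambda>w. f w + g w"]) (auto simp: Ab_add F_mero F_add)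
  show "x * y \<in> FL" unfolding FL_def using fg
    by (intro image_eqI[of _ _ "\<lambda>w. f w * g w"]) (auto simp: Ab_mult F_mero F_mult)
next
  fix x assume "x \<in> FL"
  then obtain f where f: "f \<in> F" "x = Ab f" by (auto simp: FL_def)
  show "- x \<in> FL" unfolding FL_def using f
    by (intro image_eqI[of _ _ "\<lambda>w. - f w"]) (auto simp: Ab_uminus F_mero F_uminus)
  show "sq x \<in> FL" unfolding FL_def using f
    by (intro image_eqI[of _ _ "sf f"]) (auto simp: sq_Ab F_mero F_sf)
  show "inverse x \<in> FL"
  proof (cases "meq S f (\<lambda>_. 0)")
    case True
    hence "x = 0" using f Ab_zero_iff F_mero by auto
    have FL0: "0 \<in> FL" using F0 by (auto simp: FL_def Ab_zero intro: image_eqI[of _ _ "\<lambda>_. 0"])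
    thus ?thesis using \<open>x = 0\<close> by simp
  next
    case False
    thus ?thesis unfolding FL_def using f
      by (intro image_eqI[of _ _ "\<lambda>w. inverse (f w)"]) (auto simp: Ab_inverse F_mero F_inv)
  qed
next
  fix x assume x: "sq x = x"
  obtain p where p: "p meromorphic_on S" "x = Ab p" using Ab_cases by blast
  have "Ab (sf p) = Ab p" using x p by (simp add: sq_Ab)
  hence "meq S (sf p) p" using p by (simp add: Ab_eq sf_mero)
  hence "p \<in> F" using p by (intro F_fix)
  thus "x \<in> FL" using p by (simp add: FL_def)
qed (use that in \<open>auto simp: sq_add sq_mult sq_one\<close>)


context
  fixes n :: nat and a z :: "nat \<Rightarrow> complex \<Rightarrow> complex"
  assumes a_F: "\<And>i. i < n \<Longrightarrow> a i \<in> F"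
    and z_mero: "\<And>i. i < n \<Longrightarrow> z i meromorphic_on S"
    and z_eq: "\<And>i. i < n \<Longrightarrow> meq S (\<lambda>w. sf (z i) w - z i w) (a i)"
begin

definition W :: "nat \<times> nat \<Rightarrow> 'a" where "W v = Ab ((Df ^^ snd v) (z (fst v)))"
definition B :: "nat \<times> nat \<Rightarrow> 'a" where "B v = Ab ((Df ^^ snd v) (a (fst v)))"

lemma sq_W: "fst v < n \<Longrightarrow> sq (W v) = W v + B v"
proof -
  assume i: "fst v < n"
  define i k where "i = fst v" and "k = snd v"
  have zi: "z i meromorphic_on S" and ai: "a i meromorphic_on S"
    using i z_mero a_F F_mero by (auto simp: i_def)
  have "Ab (\<lambda>w. sf (z i) w - z i w) = Ab (a i)"
    using z_eq[of i] i zi ai by (subst Ab_eq) (auto simp: i_def intro!: meromorphic_intros sf_mero)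
  hence sz: "sq (Ab (z i)) = Ab (z i) + Ab (a i)"
    using zi by (simp add: Ab_diff sf_mero sq_Ab algebra_simps)
  have "sq (W v) = sq ((Dq ^^ k) (Ab (z i)))" by (simp add: W_def i_def k_def Dqk_Ab zi[unfolded i_def])
  also have "\<dots> = (Dq ^^ k) (Ab (z i)) + (Dq ^^ k) (Ab (a i))"
    by (simp add: Dqk_sq[symmetric] sz Dqk_add)
  also have "\<dots> = W v + B v" by (simp add: W_def B_def i_def k_def Dqk_Ab zi[unfolded i_def] ai[unfolded i_def])
  finally show ?thesis .
qed

lemma B_FL: "fst v < n \<Longrightarrow> B v \<in> FL"
  using a_F by (auto simp: B_def FL_def intro!: Dfk_F)

lemma W_mero: "fst v < n \<Longrightarrow> (Df ^^ snd v) (z (fst v)) meromorphic_on S"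
  using z_mero by (auto intro: Dfk_mero)

lemma Ab_expr:
  assumes "\<And>\<alpha>. \<alpha> \<in> M \<Longrightarrow> c \<alpha> meromorphic_on S"
  shows "(\<lambda>w. \<Sum>\<alpha>\<in>M. c \<alpha> w * (\<Prod>(i, k)\<in>{..<n} \<times> {..m}. ((Df ^^ k) (z i) w) ^ \<alpha> (i, k)))
           meromorphic_on S"
    "Ab (\<lambda>w. \<Sum>\<alpha>\<in>M. c \<alpha> w * (\<Prod>(i, k)\<in>{..<n} \<times> {..m}. ((Df ^^ k) (z i) w) ^ \<alpha> (i, k))) =
       (\<Sum>\<alpha>\<in>M. Ab (c \<alpha>) * (\<Prod>v\<in>{..<n} \<times> {..m}. W v ^ \<alpha> v))"
proof -
  let ?V = "{..<n} \<times> {..m}"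
  have eq: "(\<lambda>w. \<Sum>\<alpha>\<in>M. c \<alpha> w * (\<Prod>(i, k)\<in>?V. ((Df ^^ k) (z i) w) ^ \<alpha> (i, k))) =
            (\<lambda>w. \<Sum>\<alpha>\<in>M. c \<alpha> w * (\<Prod>v\<in>?V. (Df ^^ snd v) (z (fst v)) w ^ \<alpha> v))"
    by (simp add: case_prod_unfold)
  have m1: "(\<lambda>w. (Df ^^ snd v) (z (fst v)) w ^ \<alpha> v) meromorphic_on S" if "v \<in> ?V" for v \<alpha>
    using W_mero[of v] that by (auto intro!: meromorphic_intros)
  have m2: "(\<lambda>w. \<Prod>v\<in>?V. (Df ^^ snd v) (z (fst v)) w ^ \<alpha> v) meromorphic_on S" for \<alpha>
    by (intro meromorphic_intros m1[unfolded]) (use W_mero in auto)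
  show "(\<lambda>w. \<Sum>\<alpha>\<in>M. c \<alpha> w * (\<Prod>(i, k)\<in>?V. ((Df ^^ k) (z i) w) ^ \<alpha> (i, k))) meromorphic_on S"
    unfolding eq using assms m2 z_mero by (intro meromorphic_intros) (auto intro: Dfk_mero)
  have "Ab (\<lambda>w. \<Sum>\<alpha>\<in>M. c \<alpha> w * (\<Prod>v\<in>?V. (Df ^^ snd v) (z (fst v)) w ^ \<alpha> v)) =
        (\<Sum>\<alpha>\<in>M. Ab (\<lambda>w. c \<alpha> w * (\<Prod>v\<in>?V. (Df ^^ snd v) (z (fst v)) w ^ \<alpha> v)))"
    using assms m2 by (intro Ab_sum) (auto intro!: meromorphic_intros Dfk_mero z_mero)
  also have "\<dots> = (\<Sum>\<alpha>\<in>M. Ab (c \<alpha>) * (\<Prod>v\<in>?V. W v ^ \<alpha> v))"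
  proof (rule sum.cong[OF refl])
    fix \<alpha> assume "\<alpha> \<in> M"
    have "Ab (\<lambda>w. c \<alpha> w * (\<Prod>v\<in>?V. (Df ^^ snd v) (z (fst v)) w ^ \<alpha> v)) =
          Ab (c \<alpha>) * Ab (\<lambda>w. \<Prod>v\<in>?V. (Df ^^ snd v) (z (fst v)) w ^ \<alpha> v)"
      using assms \<open>\<alpha> \<in> M\<close> m2 by (intro Ab_mult) auto
    also have "Ab (\<lambda>w. \<Prod>v\<in>?V. (Df ^^ snd v) (z (fst v)) w ^ \<alpha> v) =
               (\<Prod>v\<in>?V. Ab (\<lambda>w. (Df ^^ snd v) (z (fst v)) w ^ \<alpha> v))"
      using m1 by (intro Ab_prod) auto
    also have "\<dots> = (\<Prod>v\<in>?V. W v ^ \<alpha> v)"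
      using W_mero by (intro prod.cong refl) (auto simp: Ab_power W_def)
    finally show "Ab (\<lambda>w. c \<alpha> w * (\<Prod>v\<in>?V. (Df ^^ snd v) (z (fst v)) w ^ \<alpha> v)) =
                  Ab (c \<alpha>) * (\<Prod>v\<in>?V. W v ^ \<alpha> v)" .
  qed
  finally show "Ab (\<lambda>w. \<Sum>\<alpha>\<in>M. c \<alpha> w * (\<Prod>(i, k)\<in>?V. ((Df ^^ k) (z i) w) ^ \<alpha> (i, k))) =
       (\<Sum>\<alpha>\<in>M. Ab (c \<alpha>) * (\<Prod>v\<in>?V. W v ^ \<alpha> v))" unfolding eq .
qed


lemma Ab_L:
  assumes "\<And>i j. i < n \<Longrightarrow> j \<le> m \<Longrightarrow> cc i j meromorphic_on S"
    and "\<And>i. i < n \<Longrightarrow> g i meromorphic_on S"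
  shows "(\<lambda>w. \<Sum>i<n. \<Sum>j\<le>m. cc i j w * (Df ^^ j) (g i) w) meromorphic_on S"
    "Ab (\<lambda>w. \<Sum>i<n. \<Sum>j\<le>m. cc i j w * (Df ^^ j) (g i) w) =
       (\<Sum>v\<in>{..<n} \<times> {..m}. Ab (cc (fst v) (snd v)) * Ab ((Df ^^ snd v) (g (fst v))))"
proof -
  have m1: "(\<lambda>w. cc i j w * (Df ^^ j) (g i) w) meromorphic_on S" if "i < n" "j \<le> m" for i j
    using assms that by (auto intro!: meromorphic_intros Dfk_mero)
  have m2: "(\<lambda>w. \<Sum>j\<le>m. cc i j w * (Df ^^ j) (g i) w) meromorphic_on S" if "i < n" for i
    by (rule meromorphic_on_sum) (use m1 that in auto)
  show "(\<lambda>w. \<Sum>i<n. \<Sum>j\<le>m. cc i j w * (Df ^^ j) (g i) w) meromorphic_on S"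
    by (rule meromorphic_on_sum) (use m2 in auto)
  have "Ab (\<lambda>w. \<Sum>i<n. \<Sum>j\<le>m. cc i j w * (Df ^^ j) (g i) w) =
        (\<Sum>i<n. Ab (\<lambda>w. \<Sum>j\<le>m. cc i j w * (Df ^^ j) (g i) w))"
    using m2 by (intro Ab_sum) auto
  also have "\<dots> = (\<Sum>i<n. \<Sum>j\<le>m. Ab (cc i j) * Ab ((Df ^^ j) (g i)))"
  proof (rule sum.cong[OF refl])
    fix i assume "i \<in> {..<n}"
    hence i: "i < n" by simp
    have "Ab (\<lambda>w. \<Sum>j\<le>m. cc i j w * (Df ^^ j) (g i) w) = (\<Sum>j\<le>m. Ab (\<lambda>w. cc i j w * (Df ^^ j) (g i) w))"
      using m1 i by (intro Ab_sum) auto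
    also have "\<dots> = (\<Sum>j\<le>m. Ab (cc i j) * Ab ((Df ^^ j) (g i)))"
      using assms i by (intro sum.cong refl Ab_mult) (auto intro: Dfk_mero)
    finally show "Ab (\<lambda>w. \<Sum>j\<le>m. cc i j w * (Df ^^ j) (g i) w) = (\<Sum>j\<le>m. Ab (cc i j) * Ab ((Df ^^ j) (g i)))" .
  qed
  also have "\<dots> = (\<Sum>v\<in>{..<n} \<times> {..m}. Ab (cc (fst v) (snd v)) * Ab ((Df ^^ snd v) (g (fst v))))"
    by (simp add: sum.cartesian_product case_prod_unfold)
  finally show "Ab (\<lambda>w. \<Sum>i<n. \<Sum>j\<le>m. cc i j w * (Df ^^ j) (g i) w) =
       (\<Sum>v\<in>{..<n} \<times> {..m}. Ab (cc (fst v) (snd v)) * Ab ((Df ^^ snd v) (g (fst v))))" .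
qed

lemma dep_imp_tel:
  assumes "diff_alg_dependent S Df F n z"
  shows "telescoper_exists S sf Df F n a"
proof -
  obtain M m c where M: "finite M" "M \<subseteq> {\<alpha>. \<forall>i k. \<alpha> (i, k) \<noteq> 0 \<longrightarrow> i < n \<and> k \<le> m}"
      "\<forall>\<alpha>\<in>M. c \<alpha> \<in> F" "\<exists>\<alpha>\<in>M. \<not> meq S (c \<alpha>) (\<lambda>_. 0)"
    and rel: "meq S (\<lambda>w. \<Sum>\<alpha>\<in>M. c \<alpha> w *
                    (\<Prod>(i, k)\<in>{..<n} \<times> {..m}. ((Df ^^ k) (z i) w) ^ \<alpha> (i, k))) (\<lambda>_. 0)"
    using assms unfolding diff_alg_dependent_def by blast
  let ?V = "{..<n} \<times> {..m}"
  have cm: "\<And>\<alpha>. \<alpha> \<in> M \<Longrightarrow> c \<alpha> meromorphic_on S" using M(3) F_mero by blast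
  have Ab_rel: "(\<Sum>\<alpha>\<in>M. Ab (c \<alpha>) * (\<Prod>v\<in>?V. W v ^ \<alpha> v)) = 0"
  proof -
    note E = Ab_expr[of M c m, OF cm]
    from rel have "Ab (\<lambda>w. \<Sum>\<alpha>\<in>M. c \<alpha> w *
                    (\<Prod>(i, k)\<in>{..<n} \<times> {..m}. ((Df ^^ k) (z i) w) ^ \<alpha> (i, k))) = 0"
      using Ab_zero_iff[OF E(1)] by simp
    thus ?thesis using E(2) by simp
  qed
  define pm where "pm \<alpha> = Abs_poly_mapping \<alpha>" for \<alpha> :: "nat \<times> nat \<Rightarrow> nat"
  have supp: "{x. \<alpha> x \<noteq> 0} \<subseteq> ?V" if "\<alpha> \<in> M" for \<alpha>
  proof
    fix x assume "x \<in> {x. \<alpha> x \<noteq> 0}"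
    moreover obtain i k where "x = (i, k)" by (cases x)
    ultimately show "x \<in> ?V" using M(2) that by auto
  qed
  have lkpm: "lk (pm \<alpha>) = \<alpha>" if "\<alpha> \<in> M" for \<alpha>
    unfolding pm_def using supp[OF that] by (intro lookup_Abs_poly_mapping) (auto intro: finite_subset)
  have kspm: "ks (pm \<alpha>) \<subseteq> ?V" if "\<alpha> \<in> M" for \<alpha>
    using supp[OF that] lkpm[OF that] by (auto simp: in_keys_iff)
  have injpm: "\<alpha> = \<beta>" if "\<alpha> \<in> M" "\<beta> \<in> M" "pm \<alpha> = pm \<beta>" for \<alpha> \<beta>
    using lkpm[OF that(1)] lkpm[OF that(2)] that(3) by metis
  have mnmpm: "mnm (pm \<alpha>) W = (\<Prod>v\<in>?V. W v ^ \<alpha> v)" if "\<alpha> \<in> M" for \<alpha>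
    using mono_alt[of ?V "pm \<alpha>" W] kspm[OF that] lkpm[OF that] by simp
  define P where "P = (\<Sum>\<alpha>\<in>M. sg (pm \<alpha>) (Ab (c \<alpha>)))"
  interpret O: ostro FL sq ?V W B by (rule FL_ostro) (auto simp: B_FL sq_W)
  have lkP: "lk P \<beta> = (\<Sum>\<alpha>\<in>M. (Ab (c \<alpha>) when pm \<alpha> = \<beta>))" for \<beta>
    by (simp add: P_def lookup_sum lookup_single)
  have inFP: "inF FL P"
    unfolding inF_def lkP
  proof (intro allI O.Fsum)
    fix \<beta> \<alpha> assume "\<alpha> \<in> M"
    hence "Ab (c \<alpha>) \<in> FL" using M(3) by (auto simp: FL_def)
    thus "(Ab (c \<alpha>) when pm \<alpha> = \<beta>) \<in> FL" using O.F0 by (auto simp: when_def)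
  qed
  have onVP: "onV ?V P"
  proof -
    have "ks P \<subseteq> (\<Union>\<alpha>\<in>M. ks (sg (pm \<alpha>) (Ab (c \<alpha>))))"
      unfolding P_def by (rule keys_sum)
    also have "\<dots> \<subseteq> pm ` M" by (auto split: if_splits)
    finally show ?thesis using kspm by (auto simp: onV_def)
  qed
  have evP: "ev P W = 0"
    using Ab_rel by (simp add: P_def ev_sum mnmpm cong: sum.cong)
  have Pnz: "P \<noteq> 0"
  proof -
    obtain \<alpha>0 where \<alpha>0: "\<alpha>0 \<in> M" "\<not> meq S (c \<alpha>0) (\<lambda>_. 0)" using M(4) by blast
    have "lk P (pm \<alpha>0) = (\<Sum>\<alpha>\<in>M. if \<alpha> = \<alpha>0 then Ab (c \<alpha>0) else 0)"
      unfolding lkP using injpm \<alpha>0(1) by (intro sum.cong refl) (auto simp: when_def)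
    also have "\<dots> = Ab (c \<alpha>0)" using \<alpha>0(1) M(1) by simp
    also have "\<dots> \<noteq> 0" using \<alpha>0 cm Ab_zero_iff by blast
    finally show ?thesis by auto
  qed
  from O.ostrowski[of P] inFP onVP evP Pnz
  obtain k where k: "\<forall>v\<in>?V. sq (k v) = k v" "\<exists>v\<in>?V. k v \<noteq> 0" "(\<Sum>v\<in>?V. k v * W v) \<in> FL"
    by (auto simp: O.II_def)
  have "\<forall>v\<in>?V. \<exists>g. g \<in> F \<and> Ab g = k v"
  proof
    fix v assume "v \<in> ?V"
    hence "k v \<in> FL" using k(1) O.fixF by blast
    thus "\<exists>g. g \<in> F \<and> Ab g = k v" by (auto simp: FL_def)
  qed
  then obtain cf where cf: "\<And>v. v \<in> ?V \<Longrightarrow> cf v \<in> F \<and> Ab (cf v) = k v" by metis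
  obtain f where f: "f \<in> F" "Ab f = (\<Sum>v\<in>?V. k v * W v)" using k(3) by (auto simp: FL_def)
  define cc where "cc i j = cf (i, j)" for i j
  show ?thesis unfolding telescoper_exists_def
  proof (rule exI[of _ m], rule exI[of _ cc], rule exI[of _ f], intro conjI allI impI)
    fix i j assume ij: "i < n" "j \<le> m"
    show "cc i j \<in> F" using cf[of "(i, j)"] ij by (simp add: cc_def)
  next
    fix i j assume ij: "i < n" "j \<le> m"
    have "Ab (sf (cc i j)) = Ab (cc i j)"
      using cf[of "(i, j)"] ij k(1) F_mero by (simp add: cc_def sq_Ab[symmetric])
    thus "meq S (sf (cc i j)) (cc i j)"
      using cf[of "(i, j)"] ij F_mero sf_mero by (subst (asm) Ab_eq) (auto simp: cc_def)
  next
    obtain v where v: "v \<in> ?V" "k v \<noteq> 0" using k(2) by blast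
    hence "\<not> meq S (cf v) (\<lambda>_. 0)" using cf[OF v(1)] F_mero Ab_zero_iff by metis
    thus "\<exists>i<n. \<exists>j\<le>m. \<not> meq S (cc i j) (\<lambda>_. 0)"
      using v(1) by (intro exI[of _ "fst v"] exI[of _ "snd v"]) (auto simp: cc_def)
  next
    show "f \<in> F" by fact
  next
    have ccm: "i < n \<Longrightarrow> j \<le> m \<Longrightarrow> cc i j meromorphic_on S" for i j
      using cf[of "(i, j)"] F_mero by (auto simp: cc_def)
    have am: "i < n \<Longrightarrow> a i meromorphic_on S" for i using a_F F_mero by auto
    note L = Ab_L[of m cc a, OF ccm am]
    have fm: "f meromorphic_on S" using f F_mero by auto
    have "Ab (\<lambda>w. sf f w - f w) = sq (Ab f) - Ab f" using fm by (simp add: Ab_diff sf_mero sq_Ab)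
    also have "\<dots> = (\<Sum>v\<in>?V. k v * (W v + B v)) - (\<Sum>v\<in>?V. k v * W v)"
      unfolding f sq_sum sq_mult using k(1) by (intro arg_cong2[where f = "(-)"] sum.cong refl) (auto simp: sq_W)
    also have "\<dots> = (\<Sum>v\<in>?V. k v * B v)"
      by (simp add: algebra_simps sum.distrib)
    also have "\<dots> = (\<Sum>v\<in>?V. Ab (cc (fst v) (snd v)) * Ab ((Df ^^ snd v) (a (fst v))))"
      using cf by (intro sum.cong refl) (auto simp: cc_def B_def)
    also have "\<dots> = Ab (\<lambda>w. \<Sum>i<n. \<Sum>j\<le>m. cc i j w * (Df ^^ j) (a i) w)" by (rule L(2)[symmetric])
    finally have "Ab (\<lambda>w. \<Sum>i<n. \<Sum>j\<le>m. cc i j w * (Df ^^ j) (a i) w) = Ab (\<lambda>w. sf f w - f w)" ..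
    thus "meq S (\<lambda>w. \<Sum>i<n. \<Sum>j\<le>m. cc i j w * (Df ^^ j) (a i) w) (\<lambda>w. sf f w - f w)"
      using L(1) fm sf_mero by (subst (asm) Ab_eq) (auto intro!: meromorphic_intros)
  qed
qed

lemma tel_imp_dep:
  assumes "telescoper_exists S sf Df F n a"
  shows "diff_alg_dependent S Df F n z"
proof -
  obtain m c f where c: "\<forall>i<n. \<forall>k\<le>m. c i k \<in> F \<and> meq S (sf (c i k)) (c i k)"
    and nz: "\<exists>i<n. \<exists>k\<le>m. \<not> meq S (c i k) (\<lambda>_. 0)" and f: "f \<in> F"
    and L: "meq S (\<lambda>w. \<Sum>i<n. \<Sum>k\<le>m. c i k w * (Df ^^ k) (a i) w) (\<lambda>w. sf f w - f w)"
    using assms unfolding telescoper_exists_def by blast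
  let ?V = "{..<n} \<times> {..m}"
  define K where "K v = Ab (c (fst v) (snd v))" for v
  have cm: "c i k meromorphic_on S" if "i < n" "k \<le> m" for i k using c that F_mero by blast
  have am: "a i meromorphic_on S" if "i < n" for i using a_F F_mero that by blast
  have fm: "f meromorphic_on S" using f F_mero by blast
  have Kfix: "sq (K v) = K v" if "v \<in> ?V" for v
  proof -
    have "Ab (sf (c (fst v) (snd v))) = Ab (c (fst v) (snd v))"
      using c that cm[of "fst v" "snd v"] sf_mero by (subst Ab_eq) auto
    moreover have "c (fst v) (snd v) meromorphic_on S" using that cm[of "fst v" "snd v"] by auto
    ultimately show ?thesis by (simp add: K_def sq_Ab)
  qed
  note LL = Ab_L[of m c a, OF cm am]
  have KB: "(\<Sum>v\<in>?V. K v * B v) = sq (Ab f) - Ab f"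
  proof -
    have "Ab (\<lambda>w. \<Sum>i<n. \<Sum>k\<le>m. c i k w * (Df ^^ k) (a i) w) = Ab (\<lambda>w. sf f w - f w)"
      using L LL(1) fm sf_mero by (subst Ab_eq) (auto intro!: meromorphic_intros)
    thus ?thesis using LL(2) fm by (simp add: K_def B_def Ab_diff sf_mero sq_Ab)
  qed
  define G where "G = (\<Sum>v\<in>?V. K v * W v) - Ab f"
  have "sq G = G"
  proof -
    have "sq G = (\<Sum>v\<in>?V. K v * (W v + B v)) - sq (Ab f)"
      unfolding G_def sq_diff sq_sum sq_mult by (intro arg_cong2[where f = "(-)"] sum.cong refl) (auto simp: Kfix sq_W)
    also have "\<dots> = G" using KB by (simp add: G_def algebra_simps sum.distrib)
    finally show ?thesis .
  qed
  then obtain h where h: "h \<in> F" "Ab h = G"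
  proof -
    obtain p where p: "p meromorphic_on S" "G = Ab p" using Ab_cases by blast
    have "Ab (sf p) = Ab p" using \<open>sq G = G\<close> p by (simp add: sq_Ab)
    hence "meq S (sf p) p" using p by (simp add: Ab_eq sf_mero)
    hence "p \<in> F" using p by (intro F_fix)
    thus ?thesis using that p by auto
  qed
  have hm: "h meromorphic_on S" using h F_mero by blast
  define e where "e v = (\<lambda>u. if u = v then 1 else 0 :: nat)" for v :: "nat \<times> nat"
  have e_inj: "e v = e v' \<longleftrightarrow> v = v'" for v v'
    unfolding e_def by (metis zero_neq_one)
  have e_nz: "e v \<noteq> (\<lambda>_. 0)" for v unfolding e_def by (metis zero_neq_one)
  define M where "M = insert (\<lambda>_. 0) (e ` ?V)"
  define cc where "cc \<alpha> = (if \<alpha> = (\<lambda>_. 0) then (\<lambda>w. - (f w + h w))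
      else c (fst (SOME v. e v = \<alpha>)) (snd (SOME v. e v = \<alpha>)))" for \<alpha>
  have cc_e: "cc (e v) = c (fst v) (snd v)" for v
  proof -
    have "(SOME v'. e v' = e v) = v" using e_inj by (intro some_equality) auto
    thus ?thesis using e_nz by (simp add: cc_def)
  qed
  have cc0: "cc (\<lambda>_. 0) = (\<lambda>w. - (f w + h w))" by (simp add: cc_def)
  have ccF: "cc \<alpha> \<in> F" if "\<alpha> \<in> M" for \<alpha>
  proof -
    have F0': "(\<lambda>w. - (f w + h w)) \<in> F" by (intro F_uminus F_add f h(1))
    from that consider "\<alpha> = (\<lambda>_. 0)" | v where "v \<in> ?V" "\<alpha> = e v" by (auto simp: M_def)
    thus ?thesis
    proof cases
      case 1 thus ?thesis using F0' cc0 by simp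
    next
      case 2 thus ?thesis using c by (auto simp: cc_e)
    qed
  qed
  have ccm: "cc \<alpha> meromorphic_on S" if "\<alpha> \<in> M" for \<alpha> using ccF[OF that] F_mero by blast
  note E = Ab_expr[of M cc m, OF ccm]
  have prod_e: "(\<Prod>u\<in>?V. W u ^ e v u) = W v" if "v \<in> ?V" for v
  proof -
    have "(\<Prod>u\<in>?V. W u ^ e v u) = (\<Prod>u\<in>?V. if u = v then W u else 1)"
      by (intro prod.cong refl) (auto simp: e_def)
    thus ?thesis using that by simp
  qed
  have "(\<Sum>\<alpha>\<in>M. Ab (cc \<alpha>) * (\<Prod>u\<in>?V. W u ^ \<alpha> u)) =
        Ab (cc (\<lambda>_. 0)) + (\<Sum>\<alpha>\<in>e ` ?V. Ab (cc \<alpha>) * (\<Prod>u\<in>?V. W u ^ \<alpha> u))"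
  proof -
    have "(\<lambda>_. 0) \<notin> e ` ?V"
    proof
      assume "(\<lambda>_. 0) \<in> e ` ?V"
      then obtain v where "(\<lambda>_. 0) = e v" by blast
      thus False using e_nz[of v] by simp
    qed
    thus ?thesis unfolding M_def by (subst sum.insert) auto
  qed
  also have "(\<Sum>\<alpha>\<in>e ` ?V. Ab (cc \<alpha>) * (\<Prod>u\<in>?V. W u ^ \<alpha> u)) = (\<Sum>v\<in>?V. K v * W v)"
    by (subst sum.reindex) (auto simp: inj_on_def e_inj cc_e K_def prod_e intro!: sum.cong)
  also have "Ab (cc (\<lambda>_. 0)) = - (Ab f + G)"
  proof -
    have "Ab (\<lambda>w. - (f w + h w)) = - Ab (\<lambda>w. f w + h w)"
      using fm hm by (intro Ab_uminus) (auto intro!: meromorphic_intros)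
    also have "Ab (\<lambda>w. f w + h w) = Ab f + Ab h" using fm hm by (rule Ab_add)
    finally show ?thesis using h by (simp add: cc0)
  qed
  finally have "(\<Sum>\<alpha>\<in>M. Ab (cc \<alpha>) * (\<Prod>u\<in>?V. W u ^ \<alpha> u)) = 0"
    by (simp add: G_def)
  hence rel: "meq S (\<lambda>w. \<Sum>\<alpha>\<in>M. cc \<alpha> w *
              (\<Prod>(i, k)\<in>?V. ((Df ^^ k) (z i) w) ^ \<alpha> (i, k))) (\<lambda>_. 0)"
    using E Ab_zero_iff by simp
  show ?thesis unfolding diff_alg_dependent_def
  proof (rule exI[of _ M], rule exI[of _ m], rule exI[of _ cc], intro conjI)
    show "finite M" by (simp add: M_def)
    show "M \<subseteq> {\<alpha>. \<forall>i k. \<alpha> (i, k) \<noteq> 0 \<longrightarrow> i < n \<and> k \<le> m}"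
      by (auto simp: M_def e_def split: if_splits)
    show "\<forall>\<alpha>\<in>M. cc \<alpha> \<in> F" using ccF by blast
    obtain i k where ik: "i < n" "k \<le> m" "\<not> meq S (c i k) (\<lambda>_. 0)" using nz by blast
    show "\<exists>\<alpha>\<in>M. \<not> meq S (cc \<alpha>) (\<lambda>_. 0)"
      using ik by (intro bexI[of _ "e (i, k)"]) (auto simp: cc_e M_def)
    show "meq S (\<lambda>w. \<Sum>\<alpha>\<in>M. cc \<alpha> w *
              (\<Prod>(i, k)\<in>?V. ((Df ^^ k) (z i) w) ^ \<alpha> (i, k))) (\<lambda>_. 0)" by (rule rel)
  qed
qed

theorem dep_iff_tel: "diff_alg_dependent S Df F n z \<longleftrightarrow> telescoper_exists S sf Df F n a"
  using dep_imp_tel tel_imp_dep by blast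
end

end


subsection \<open>The field of meromorphic functions on UNIV :: complex set modulo equality almost everywhere\<close>

quotient_type mer1 = "complex \<Rightarrow> complex" / partial: "mrel (UNIV :: complex set)"
  morphisms rep_mer1 Abs_mer1
  by (rule part_equivp_mrel)

lemma open_mer1: "open (UNIV :: complex set)" by simp
lemma connected_mer1: "connected (UNIV :: complex set)" by (rule connected_UNIV)
lemma nonempty_mer1: "(UNIV :: complex set) \<noteq> {}" by simp

instantiation mer1 :: field
begin

lift_definition zero_mer1 :: "mer1" is "\<lambda>_. 0" by (rule mrel_const)
lift_definition one_mer1 :: "mer1" is "\<lambda>_. 1" by (rule mrel_const)
lift_definition plus_mer1 :: "mer1 \<Rightarrow> mer1 \<Rightarrow> mer1" is "\<lambda>f g w. f w + g w" by (rule mrel_add)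
lift_definition uminus_mer1 :: "mer1 \<Rightarrow> mer1" is "\<lambda>f w. - f w" by (rule mrel_uminus)
lift_definition minus_mer1 :: "mer1 \<Rightarrow> mer1 \<Rightarrow> mer1" is "\<lambda>f g w. f w - g w"
  unfolding diff_conv_add_uminus by (intro mrel_add mrel_uminus)
lift_definition times_mer1 :: "mer1 \<Rightarrow> mer1 \<Rightarrow> mer1" is "\<lambda>f g w. f w * g w" by (rule mrel_mult)
lift_definition inverse_mer1 :: "mer1 \<Rightarrow> mer1" is "\<lambda>f w. inverse (f w)" by (rule mrel_inverse)
definition "x div y = x * inverse y" for x y :: mer1

instance
proof
  fix a b c :: mer1
  show "a + b + c = a + (b + c)" by transfer (auto simp: mrel_def meq_def algebra_simps intro!: meromorphic_intros)
  show "a + b = b + a" by transfer (auto simp: mrel_def meq_def algebra_simps intro!: meromorphic_intros)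
  show "0 + a = a" by transfer (auto simp: mrel_def meq_def algebra_simps intro!: meromorphic_intros)
  show "- a + a = 0" by transfer (auto simp: mrel_def meq_def algebra_simps intro!: meromorphic_intros)
  show "a - b = a + - b" by transfer (auto simp: mrel_def meq_def algebra_simps intro!: meromorphic_intros)
  show "a * b * c = a * (b * c)" by transfer (auto simp: mrel_def meq_def algebra_simps intro!: meromorphic_intros)
  show "a * b = b * a" by transfer (auto simp: mrel_def meq_def algebra_simps intro!: meromorphic_intros)
  show "1 * a = a" by transfer (auto simp: mrel_def meq_def algebra_simps intro!: meromorphic_intros)
  show "(a + b) * c = a * c + b * c" by transfer (auto simp: mrel_def meq_def algebra_simps intro!: meromorphic_intros)
  show "a div b = a * inverse b" by (simp add: divide_mer1_def)
  show "inverse (0 :: mer1) = 0" by transfer (auto simp: mrel_def meq_def intro!: meromorphic_intros)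
  show "(0 :: mer1) \<noteq> 1" by transfer (use nonempty_mer1 in \<open>auto simp: mrel_def ev_at_all\<close>)
  show "a \<noteq> 0 \<Longrightarrow> inverse a * a = 1"
    by transfer (rule mrel_inv_mult[OF open_mer1 connected_mer1])
qed

end

lemma Abs_mer1_eq_iff:
  "f meromorphic_on (UNIV :: complex set) \<Longrightarrow> g meromorphic_on (UNIV :: complex set) \<Longrightarrow> Abs_mer1 f = Abs_mer1 g \<longleftrightarrow> meq (UNIV :: complex set) f g"
  using Quotient_rel[OF Quotient_mer1, of f g] by (auto simp: mrel_def meq_refl)

lemma Abs_mer1_cases: "\<exists>f. f meromorphic_on (UNIV :: complex set) \<and> x = Abs_mer1 f"
proof -
  have "mrel (UNIV :: complex set) (rep_mer1 x) (rep_mer1 x)" by (rule Quotient_rep_reflp[OF Quotient_mer1])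
  thus ?thesis by (intro exI[of _ "rep_mer1 x"]) (auto simp: mrel_def Quotient_abs_rep[OF Quotient_mer1])
qed

lemma Abs_mer1_add: "f meromorphic_on (UNIV :: complex set) \<Longrightarrow> g meromorphic_on (UNIV :: complex set) \<Longrightarrow>
    Abs_mer1 (\<lambda>w. f w + g w) = Abs_mer1 f + Abs_mer1 g"
  by (simp add: plus_mer1.abs_eq mrel_def meq_def)

lemma Abs_mer1_mult: "f meromorphic_on (UNIV :: complex set) \<Longrightarrow> g meromorphic_on (UNIV :: complex set) \<Longrightarrow>
    Abs_mer1 (\<lambda>w. f w * g w) = Abs_mer1 f * Abs_mer1 g"
  by (simp add: times_mer1.abs_eq mrel_def meq_def)

lemma Abs_mer1_uminus: "f meromorphic_on (UNIV :: complex set) \<Longrightarrow> Abs_mer1 (\<lambda>w. - f w) = - Abs_mer1 f"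
  by (simp add: uminus_mer1.abs_eq mrel_def meq_def)

lemma Abs_mer1_inverse: "f meromorphic_on (UNIV :: complex set) \<Longrightarrow> Abs_mer1 (\<lambda>w. inverse (f w)) = inverse (Abs_mer1 f)"
  by (simp add: inverse_mer1.abs_eq mrel_def meq_def)

lemma Abs_mer1_zero: "Abs_mer1 (\<lambda>_. 0) = 0"
  by (simp add: zero_mer1_def)

lemma Abs_mer1_one: "Abs_mer1 (\<lambda>_. 1) = 1"
  by (simp add: one_mer1_def)

lemma Abs_mer1_of_nat: "Abs_mer1 (\<lambda>_. of_nat n) = of_nat n"
proof (induction n)
  case (Suc n)
  have "Abs_mer1 (\<lambda>_. of_nat (Suc n)) = Abs_mer1 (\<lambda>w. 1 + of_nat n)" by simp
  also have "\<dots> = 1 + of_nat n" by (subst Abs_mer1_add) (auto simp: Abs_mer1_one Suc)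
  finally show ?case by simp
qed (simp add: Abs_mer1_zero)

instance mer1 :: field_char_0
proof
  show "inj (of_nat :: nat \<Rightarrow> mer1)"
  proof
    fix m n :: nat assume "(of_nat m :: mer1) = of_nat n"
    hence "Abs_mer1 (\<lambda>_. of_nat m) = Abs_mer1 (\<lambda>_. of_nat n)" by (simp add: Abs_mer1_of_nat)
    hence "meq (UNIV :: complex set) (\<lambda>_. of_nat m) (\<lambda>_. of_nat n)" by (subst (asm) Abs_mer1_eq_iff) auto
    thus "m = n" using ev_at_all[OF nonempty_mer1, of "of_nat m" "of_nat n"] by auto
  qed
qed

subsection \<open>The field of meromorphic functions on - {0 :: complex} modulo equality almost everywhere\<close>

quotient_type mer2 = "complex \<Rightarrow> complex" / partial: "mrel (- {0 :: complex})"
  morphisms rep_mer2 Abs_mer2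
  by (rule part_equivp_mrel)

lemma open_mer2: "open (- {0 :: complex})" by (simp add: open_Compl)
lemma connected_mer2: "connected (- {0 :: complex})" by (rule connected_Cstar)
lemma nonempty_mer2: "(- {0 :: complex}) \<noteq> {}" by (metis ComplI empty_iff one_neq_zero singletonD)

instantiation mer2 :: field
begin

lift_definition zero_mer2 :: "mer2" is "\<lambda>_. 0" by (rule mrel_const)
lift_definition one_mer2 :: "mer2" is "\<lambda>_. 1" by (rule mrel_const)
lift_definition plus_mer2 :: "mer2 \<Rightarrow> mer2 \<Rightarrow> mer2" is "\<lambda>f g w. f w + g w" by (rule mrel_add)
lift_definition uminus_mer2 :: "mer2 \<Rightarrow> mer2" is "\<lambda>f w. - f w" by (rule mrel_uminus)
lift_definition minus_mer2 :: "mer2 \<Rightarrow> mer2 \<Rightarrow> mer2" is "\<lambda>f g w. f w - g w"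
  unfolding diff_conv_add_uminus by (intro mrel_add mrel_uminus)
lift_definition times_mer2 :: "mer2 \<Rightarrow> mer2 \<Rightarrow> mer2" is "\<lambda>f g w. f w * g w" by (rule mrel_mult)
lift_definition inverse_mer2 :: "mer2 \<Rightarrow> mer2" is "\<lambda>f w. inverse (f w)" by (rule mrel_inverse)
definition "x div y = x * inverse y" for x y :: mer2

instance
proof
  fix a b c :: mer2
  show "a + b + c = a + (b + c)" by transfer (auto simp: mrel_def meq_def algebra_simps intro!: meromorphic_intros)
  show "a + b = b + a" by transfer (auto simp: mrel_def meq_def algebra_simps intro!: meromorphic_intros)
  show "0 + a = a" by transfer (auto simp: mrel_def meq_def algebra_simps intro!: meromorphic_intros)
  show "- a + a = 0" by transfer (auto simp: mrel_def meq_def algebra_simps intro!: meromorphic_intros)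
  show "a - b = a + - b" by transfer (auto simp: mrel_def meq_def algebra_simps intro!: meromorphic_intros)
  show "a * b * c = a * (b * c)" by transfer (auto simp: mrel_def meq_def algebra_simps intro!: meromorphic_intros)
  show "a * b = b * a" by transfer (auto simp: mrel_def meq_def algebra_simps intro!: meromorphic_intros)
  show "1 * a = a" by transfer (auto simp: mrel_def meq_def algebra_simps intro!: meromorphic_intros)
  show "(a + b) * c = a * c + b * c" by transfer (auto simp: mrel_def meq_def algebra_simps intro!: meromorphic_intros)
  show "a div b = a * inverse b" by (simp add: divide_mer2_def)
  show "inverse (0 :: mer2) = 0" by transfer (auto simp: mrel_def meq_def intro!: meromorphic_intros)
  show "(0 :: mer2) \<noteq> 1" by transfer (use nonempty_mer2 in \<open>auto simp: mrel_def ev_at_all\<close>)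
  show "a \<noteq> 0 \<Longrightarrow> inverse a * a = 1"
    by transfer (rule mrel_inv_mult[OF open_mer2 connected_mer2])
qed

end

lemma Abs_mer2_eq_iff:
  "f meromorphic_on (- {0 :: complex}) \<Longrightarrow> g meromorphic_on (- {0 :: complex}) \<Longrightarrow> Abs_mer2 f = Abs_mer2 g \<longleftrightarrow> meq (- {0 :: complex}) f g"
  using Quotient_rel[OF Quotient_mer2, of f g] by (auto simp: mrel_def meq_refl)

lemma Abs_mer2_cases: "\<exists>f. f meromorphic_on (- {0 :: complex}) \<and> x = Abs_mer2 f"
proof -
  have "mrel (- {0 :: complex}) (rep_mer2 x) (rep_mer2 x)" by (rule Quotient_rep_reflp[OF Quotient_mer2])
  thus ?thesis by (intro exI[of _ "rep_mer2 x"]) (auto simp: mrel_def Quotient_abs_rep[OF Quotient_mer2])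
qed

lemma Abs_mer2_add: "f meromorphic_on (- {0 :: complex}) \<Longrightarrow> g meromorphic_on (- {0 :: complex}) \<Longrightarrow>
    Abs_mer2 (\<lambda>w. f w + g w) = Abs_mer2 f + Abs_mer2 g"
  by (simp add: plus_mer2.abs_eq mrel_def meq_def)

lemma Abs_mer2_mult: "f meromorphic_on (- {0 :: complex}) \<Longrightarrow> g meromorphic_on (- {0 :: complex}) \<Longrightarrow>
    Abs_mer2 (\<lambda>w. f w * g w) = Abs_mer2 f * Abs_mer2 g"
  by (simp add: times_mer2.abs_eq mrel_def meq_def)

lemma Abs_mer2_uminus: "f meromorphic_on (- {0 :: complex}) \<Longrightarrow> Abs_mer2 (\<lambda>w. - f w) = - Abs_mer2 f"
  by (simp add: uminus_mer2.abs_eq mrel_def meq_def)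

lemma Abs_mer2_inverse: "f meromorphic_on (- {0 :: complex}) \<Longrightarrow> Abs_mer2 (\<lambda>w. inverse (f w)) = inverse (Abs_mer2 f)"
  by (simp add: inverse_mer2.abs_eq mrel_def meq_def)

lemma Abs_mer2_zero: "Abs_mer2 (\<lambda>_. 0) = 0"
  by (simp add: zero_mer2_def)

lemma Abs_mer2_one: "Abs_mer2 (\<lambda>_. 1) = 1"
  by (simp add: one_mer2_def)

lemma Abs_mer2_of_nat: "Abs_mer2 (\<lambda>_. of_nat n) = of_nat n"
proof (induction n)
  case (Suc n)
  have "Abs_mer2 (\<lambda>_. of_nat (Suc n)) = Abs_mer2 (\<lambda>w. 1 + of_nat n)" by simp
  also have "\<dots> = 1 + of_nat n" by (subst Abs_mer2_add) (auto simp: Abs_mer2_one Suc)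
  finally show ?case by simp
qed (simp add: Abs_mer2_zero)

instance mer2 :: field_char_0
proof
  show "inj (of_nat :: nat \<Rightarrow> mer2)"
  proof
    fix m n :: nat assume "(of_nat m :: mer2) = of_nat n"
    hence "Abs_mer2 (\<lambda>_. of_nat m) = Abs_mer2 (\<lambda>_. of_nat n)" by (simp add: Abs_mer2_of_nat)
    hence "meq (- {0 :: complex}) (\<lambda>_. of_nat m) (\<lambda>_. of_nat n)" by (subst (asm) Abs_mer2_eq_iff) auto
    thus "m = n" using ev_at_all[OF nonempty_mer2, of "of_nat m" "of_nat n"] by auto
  qed
qed


subsection \<open>Setting 1\<close>

lemma tau_affine: "tau f = (\<lambda>w. f (1 * w + 1))"
  by (simp add: tau_def)

lemma mero_shift1: "f meromorphic_on UNIV \<Longrightarrow> (\<lambda>w. f (w + 1)) meromorphic_on UNIV"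
  using mero_affine[of f UNIV 1 1] by simp

lemma meq_shift1: "meq UNIV f g \<Longrightarrow> meq UNIV (\<lambda>w. f (w + 1)) (\<lambda>w. g (w + 1))"
  using meq_affine[of 1 UNIV 1 f g] by simp

lemma tau_mero: "f meromorphic_on UNIV \<Longrightarrow> tau f meromorphic_on UNIV"
  unfolding tau_def by (rule mero_shift1)

lemma D1_mero: "f meromorphic_on S \<Longrightarrow> D1 f meromorphic_on S"
  unfolding D1_def by (rule meromorphic_on_deriv)

lift_definition sq1 :: "mer1 \<Rightarrow> mer1" is tau
  unfolding mrel_def tau_def by (auto intro: mero_shift1 meq_shift1)

lift_definition Dq1 :: "mer1 \<Rightarrow> mer1" is D1
  unfolding mrel_def D1_def by (auto intro: meromorphic_on_deriv meq_deriv)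

lemma frame1:
  assumes "setting1 F"
  shows "mframe UNIV Abs_mer1 tau D1 sq1 Dq1 F"
proof
  show "open (UNIV :: complex set)" by simp
next
  fix f g :: "complex \<Rightarrow> complex"
  assume f: "f meromorphic_on UNIV"
  show "tau f meromorphic_on UNIV" using f by (rule tau_mero)
  show "D1 f meromorphic_on UNIV" using f by (rule D1_mero)
  show "sq1 (Abs_mer1 f) = Abs_mer1 (tau f)" using f by (simp add: sq1.abs_eq mrel_def meq_refl)
  show "Dq1 (Abs_mer1 f) = Abs_mer1 (D1 f)" using f by (simp add: Dq1.abs_eq mrel_def meq_refl)
  show "Abs_mer1 (\<lambda>w. - f w) = - Abs_mer1 f" using f by (rule Abs_mer1_uminus)
  show "Abs_mer1 (\<lambda>w. inverse (f w)) = inverse (Abs_mer1 f)" using f by (rule Abs_mer1_inverse)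
  assume g: "g meromorphic_on UNIV"
  show "(Abs_mer1 f = Abs_mer1 g) = meq UNIV f g" using f g by (rule Abs_mer1_eq_iff)
  show "Abs_mer1 (\<lambda>w. f w + g w) = Abs_mer1 f + Abs_mer1 g" using f g by (rule Abs_mer1_add)
  show "Abs_mer1 (\<lambda>w. f w * g w) = Abs_mer1 f * Abs_mer1 g" using f g by (rule Abs_mer1_mult)
next
  fix x :: mer1
  show "\<exists>f. f meromorphic_on UNIV \<and> x = Abs_mer1 f" by (rule Abs_mer1_cases)
next
  show "Abs_mer1 (\<lambda>_. 0) = 0" by (rule Abs_mer1_zero)
  show "Abs_mer1 (\<lambda>_. 1) = 1" by (rule Abs_mer1_one)
next
  fix x y :: mer1
  show "sq1 (x + y) = sq1 x + sq1 y"
    by transfer (auto simp: mrel_def meq_def tau_def intro!: meromorphic_intros tau_mero[unfolded tau_def])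
  show "sq1 (x * y) = sq1 x * sq1 y"
    by transfer (auto simp: mrel_def meq_def tau_def intro!: meromorphic_intros tau_mero[unfolded tau_def])
  show "Dq1 (x + y) = Dq1 x + Dq1 y"
    by transfer (auto simp: mrel_def D1_def intro!: meromorphic_intros meq_deriv_add)
next
  show "sq1 1 = 1" by transfer (auto simp: mrel_def meq_def tau_def)
next
  fix x :: mer1
  show "Dq1 (sq1 x) = sq1 (Dq1 x)"
  proof transfer
    fix f assume "mrel UNIV f f"
    hence f: "f meromorphic_on UNIV" by (simp add: mrel_def)
    have "meq UNIV (deriv (\<lambda>x. f (1 * x + 1))) (\<lambda>w. 1 * deriv f (1 * w + 1))"
      by (rule meq_deriv_affine[OF f]) auto
    thus "mrel UNIV (D1 (tau f)) (tau (D1 f))"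
      using f by (auto simp: mrel_def D1_def tau_def intro!: meromorphic_intros mero_shift1)
  qed
next
  show "mero_subfield UNIV F" using assms by (simp add: setting1_def)
next
  fix f assume "f \<in> F"
  thus "tau f \<in> F" "D1 f \<in> F" using assms by (auto simp: setting1_def)
next
  fix p assume "p meromorphic_on UNIV" "meq UNIV (tau p) p"
  thus "p \<in> F" using assms by (auto simp: setting1_def mero_on_iff)
qed

subsection \<open>Setting 2\<close>

lemma sigq_affine: "sigq q f = (\<lambda>w. f (q * w + 0))"
  by (simp add: sigq_def)

lemma mero_scale: "q \<noteq> 0 \<Longrightarrow> f meromorphic_on (- {0}) \<Longrightarrow> (\<lambda>w. f (q * w)) meromorphic_on (- {0})"
  using mero_affine[of f "- {0}" q 0] by simp

lemma meq_scale: "q \<noteq> 0 \<Longrightarrow> meq (- {0}) f g \<Longrightarrow> meq (- {0}) (\<lambda>w. f (q * w)) (\<lambda>w. g (q * w))"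
  using meq_affine[of q "- {0}" 0 f g] by simp

lemma sigq_mero: "q \<noteq> 0 \<Longrightarrow> f meromorphic_on (- {0}) \<Longrightarrow> sigq q f meromorphic_on (- {0})"
  unfolding sigq_def by (rule mero_scale)

lemma D2_mero: "f meromorphic_on S \<Longrightarrow> D2 f meromorphic_on S"
  unfolding D2_def by (intro meromorphic_intros meromorphic_on_deriv)

lemma meq_mult_left: "meq S f g \<Longrightarrow> meq S (\<lambda>w. h w * f w) (\<lambda>w. h w * g w)"
  unfolding meq_def by (auto elim!: eventually_mono)

lift_definition sq2 :: "complex \<Rightarrow> mer2 \<Rightarrow> mer2" is "\<lambda>q f. if q = 0 then f else sigq q f"
proof -
  fix q :: complex and f g assume "mrel (- {0}) f g"
  thus "mrel (- {0}) (if q = 0 then f else sigq q f) (if q = 0 then g else sigq q g)"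
    unfolding mrel_def sigq_def by (auto intro: mero_scale meq_scale)
qed

lift_definition Dq2 :: "mer2 \<Rightarrow> mer2" is D2
  unfolding mrel_def D2_def
  by (auto intro!: meromorphic_intros meromorphic_on_deriv meq_mult_left meq_deriv)

lemma Dq2_sq2: "Dq2 (sq2 q x) = sq2 q (Dq2 x)"
proof transfer
  fix q :: complex and f assume "mrel (- {0}) f f"
  hence f: "f meromorphic_on (- {0})" by (simp add: mrel_def)
  show "mrel (- {0}) (D2 (if q = 0 then f else sigq q f)) (if q = 0 then D2 f else sigq q (D2 f))"
  proof (cases "q = 0")
    case True thus ?thesis using f by (simp add: mrel_def meq_refl D2_mero)
  next
    case q: False
    have "meq (- {0}) (deriv (\<lambda>x. f (q * x + 0))) (\<lambda>w. q * deriv f (q * w + 0))"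
      by (rule meq_deriv_affine[OF f]) (use q in auto)
    hence "meq (- {0}) (\<lambda>w. w * deriv (\<lambda>x. f (q * x + 0)) w) (\<lambda>w. w * (q * deriv f (q * w + 0)))"
      by (rule meq_mult_left)
    moreover have "sigq q f meromorphic_on (- {0})" using q f by (rule sigq_mero)
    moreover have "(\<lambda>w. D2 f (q * w)) meromorphic_on (- {0})"
      using mero_scale[OF q D2_mero[OF f]] by simp
    ultimately show ?thesis
      using q f
      by (auto simp: mrel_def D2_def sigq_def mult_ac intro!: meromorphic_intros meromorphic_on_deriv)
  qed
qed

lemma frame2:
  assumes "setting2 q F" "q \<noteq> 0"
  shows "mframe (- {0}) Abs_mer2 (sigq q) D2 (sq2 q) Dq2 F"
proof
  show "open (- {0 :: complex})" by (simp add: open_Compl)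
next
  fix f g :: "complex \<Rightarrow> complex"
  assume f: "f meromorphic_on (- {0})"
  show "sigq q f meromorphic_on (- {0})" using assms(2) f by (rule sigq_mero)
  show "D2 f meromorphic_on (- {0})" using f by (rule D2_mero)
  show "sq2 q (Abs_mer2 f) = Abs_mer2 (sigq q f)" using f assms(2) by (simp add: sq2.abs_eq mrel_def meq_refl)
  show "Dq2 (Abs_mer2 f) = Abs_mer2 (D2 f)" using f by (simp add: Dq2.abs_eq mrel_def meq_refl)
  show "Abs_mer2 (\<lambda>w. - f w) = - Abs_mer2 f" using f by (rule Abs_mer2_uminus)
  show "Abs_mer2 (\<lambda>w. inverse (f w)) = inverse (Abs_mer2 f)" using f by (rule Abs_mer2_inverse)
  assume g: "g meromorphic_on (- {0})"
  show "(Abs_mer2 f = Abs_mer2 g) = meq (- {0}) f g" using f g by (rule Abs_mer2_eq_iff)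
  show "Abs_mer2 (\<lambda>w. f w + g w) = Abs_mer2 f + Abs_mer2 g" using f g by (rule Abs_mer2_add)
  show "Abs_mer2 (\<lambda>w. f w * g w) = Abs_mer2 f * Abs_mer2 g" using f g by (rule Abs_mer2_mult)
next
  fix x :: mer2
  show "\<exists>f. f meromorphic_on (- {0}) \<and> x = Abs_mer2 f" by (rule Abs_mer2_cases)
next
  show "Abs_mer2 (\<lambda>_. 0) = 0" by (rule Abs_mer2_zero)
  show "Abs_mer2 (\<lambda>_. 1) = 1" by (rule Abs_mer2_one)
next
  fix x y :: mer2
  show "sq2 q (x + y) = sq2 q x + sq2 q y"
    using assms(2)
    by transfer (auto simp: mrel_def meq_def sigq_def intro!: meromorphic_intros sigq_mero[unfolded sigq_def])
  show "sq2 q (x * y) = sq2 q x * sq2 q y"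
    using assms(2)
    by transfer (auto simp: mrel_def meq_def sigq_def intro!: meromorphic_intros sigq_mero[unfolded sigq_def])
  show "Dq2 (x + y) = Dq2 x + Dq2 y"
  proof transfer
    fix f g assume "mrel (- {0}) f f" "mrel (- {0}) g g"
    hence f: "f meromorphic_on (- {0})" and g: "g meromorphic_on (- {0})" by (auto simp: mrel_def)
    have "meq (- {0}) (\<lambda>w. w * deriv (\<lambda>w. f w + g w) w) (\<lambda>w. w * (deriv f w + deriv g w))"
      by (intro meq_mult_left meq_deriv_add f g)
    thus "mrel (- {0}) (D2 (\<lambda>w. f w + g w)) (\<lambda>w. D2 f w + D2 g w)"
      using f g by (auto simp: mrel_def D2_def algebra_simps intro!: meromorphic_intros meromorphic_on_deriv)
  qed
next
  show "sq2 q 1 = 1" by transfer (auto simp: mrel_def meq_def sigq_def)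
next
  fix x :: mer2
  show "Dq2 (sq2 q x) = sq2 q (Dq2 x)" by (rule Dq2_sq2)
next
  show "mero_subfield (- {0}) F" using assms by (simp add: setting2_def)
next
  fix f assume "f \<in> F"
  thus "sigq q f \<in> F" "D2 f \<in> F" using assms by (auto simp: setting2_def)
next
  fix p assume "p meromorphic_on (- {0})" "meq (- {0}) (sigq q p) p"
  thus "p \<in> F" using assms by (auto simp: setting2_def mero_on_iff open_Compl)
qed


theorem mainTheorem5:
  shows "(\<forall>F n (a :: nat \<Rightarrow> complex \<Rightarrow> complex) z.
            setting1 F \<and>
            (\<forall>i<n. a i \<in> F \<and> \<not> meq UNIV (a i) (\<lambda>_. 0)) \<and>
            (\<forall>i<n. mero_on UNIV (z i) \<and> meq UNIV (\<lambda>w. tau (z i) w - z i w) (a i))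
            \<longrightarrow> (diff_alg_dependent UNIV D1 F n z \<longleftrightarrow> telescoper_exists UNIV tau D1 F n a))
       \<and> (\<forall>q F n (a :: nat \<Rightarrow> complex \<Rightarrow> complex) z.
            q \<noteq> 0 \<and> norm q \<noteq> 1 \<and> setting2 q F \<and>
            (\<forall>i<n. a i \<in> F \<and> \<not> meq (- {0}) (a i) (\<lambda>_. 0)) \<and>
            (\<forall>i<n. mero_on (- {0}) (z i) \<and> meq (- {0}) (\<lambda>w. sigq q (z i) w - z i w) (a i))
            \<longrightarrow> (diff_alg_dependent (- {0}) D2 F n z \<longleftrightarrow> telescoper_exists (- {0}) (sigq q) D2 F n a))"
proof (intro conjI allI impI)
  fix F n and a z :: "nat \<Rightarrow> complex \<Rightarrow> complex"
  assume H: "setting1 F \<and> (\<forall>i<n. a i \<in> F \<and> \<not> meq UNIV (a i) (\<lambda>_. 0)) \<and>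
    (\<forall>i<n. mero_on UNIV (z i) \<and> meq UNIV (\<lambda>w. tau (z i) w - z i w) (a i))"
  have fr: "mframe UNIV Abs_mer1 tau D1 sq1 Dq1 F" using H by (intro frame1) auto
  show "diff_alg_dependent UNIV D1 F n z \<longleftrightarrow> telescoper_exists UNIV tau D1 F n a"
    by (rule mframe.dep_iff_tel[OF fr]) (use H in \<open>auto simp: mero_on_iff\<close>)
next
  fix q F n and a z :: "nat \<Rightarrow> complex \<Rightarrow> complex"
  assume H: "q \<noteq> 0 \<and> norm q \<noteq> 1 \<and> setting2 q F \<and>
    (\<forall>i<n. a i \<in> F \<and> \<not> meq (- {0}) (a i) (\<lambda>_. 0)) \<and>
    (\<forall>i<n. mero_on (- {0}) (z i) \<and> meq (- {0}) (\<lambda>w. sigq q (z i) w - z i w) (a i))"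
  have fr: "mframe (- {0}) Abs_mer2 (sigq q) D2 (sq2 q) Dq2 F" using H by (intro frame2) auto
  show "diff_alg_dependent (- {0}) D2 F n z \<longleftrightarrow> telescoper_exists (- {0}) (sigq q) D2 F n a"
    by (rule mframe.dep_iff_tel[OF fr]) (use H in \<open>auto simp: mero_on_iff open_Compl\<close>)
qed


end
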